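(* Let $\mu$ be a finite Borel measure on $\Sigma$. (i) Suppose $\mathcal{D}$ is two-dimensional and $S\subseteq\Sigma$ satisfies $\mu(S)>0$ and, for all $\omega\in S$, $\lim_{n\to\infty}R_n(\omega)/n=0$ and $\liminf_{n\to\infty}\frac{\log\mu(B_n(\omega))}{\log\prod_{\nu=1}^n b_{i_\nu}}\ge d$. Then $\dim\Pi(S)\ge d$. (ii) Suppose $S\subseteq\Sigma$ satisfies $\liminf_{n\to\infty}\frac{\log\mu(B_n(\omega))}{\log\prod_{\nu=1}^n b_{i_\nu}}\le d$ for all $\omega\in S$. Then $\dim\Pi(S)\le d$.
   Context: Standing setting (Lalley–Gatzouras system). Let $p\ge 1$ and $m_1,\dots,m_p\ge1$ be integers and $\mathcal{D}=\{(i,j):1\le i\le p,\ 1\le j\le m_i\}$. For $(i,j)\in\mathcal{D}$ let $S_{ij}(x)=\begin{pmatrix}a_{ij}&0\\0&b_i\end{pmatrix}x+\begin{pmatrix}c_{ij}\\ d_i\end{pmatrix}$ on $[0,1]^2$, where $0<a_{ij}\le b_i<1$, $0\le d_1\le\dots\le d_p<1$, $d_{i+1}-d_i\ge b_i$, $b_p+d_p\le 1$, and for each $i$: $0\le c_{i1}\le\dots\le c_{im_i}<1$, $c_{i(j+1)}-c_{ij}\ge a_{ij}$, $a_{im_i}+c_{im_i}\le1$. Let $\Sigma=\mathcal{D}^{\mathbb{N}}$, write $\omega=((i_\nu,j_\nu))_{\nu\ge1}$, $\Pi(\omega)=\lim_n S_{\omega_1}\circ\cdots\circ S_{\omega_n}([0,1]^2)$.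 Define $L_n(\omega)=\min\{l\ge1:\prod_{\nu=1}^l a_{i_\nu j_\nu}\le\prod_{\nu=1}^n b_{i_\nu}\}$ and $B_n(\omega)=\{\omega'\in\Sigma:\omega'_\nu=\omega_\nu\ (1\le\nu\le L_n(\omega)),\ i'_\nu=i_\nu\ (L_n(\omega)<\nu\le n)\}$. $\mathcal{D}$ is two-dimensional if there exist $(i_1,j_1),(i_2,j_2)\in\mathcal{D}$ with $i_1=i_2$, $j_1\ne j_2$, and $(i_3,j_3),(i_4,j_4)\in\mathcal{D}$ with $i_3\ne i_4$. For $d\in\mathcal{D}$, $R^d_n(\omega)=\min\{l>n:\omega_l=d\}-n$, $R_n(\omega)=\max_{d\in\mathcal{D}}R^d_n(\omega)$. $\dim$ is Hausdorff dimension. *)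

theory Defs
  imports "HOL-Analysis.Analysis"
begin

definition hausdorff_content :: "real \<Rightarrow> real \<Rightarrow> 'a::metric_space set \<Rightarrow> ennreal" where
  "hausdorff_content s \<delta> A =
     (INF U \<in> {U :: nat \<Rightarrow> 'a set. A \<subseteq> (\<Union>i. U i) \<and> (\<forall>i. bounded (U i) \<and> diameter (U i) \<le> \<delta>)}.
        (\<Sum>i. ennreal (diameter (U i) powr s)))"

definition hausdorff_measure :: "real \<Rightarrow> 'a::metric_space set \<Rightarrow> ennreal" where
  "hausdorff_measure s A = (SUP \<delta> \<in> {0<..}. hausdorff_content s \<delta> A)"

definition hausdorff_dim :: "'a::metric_space set \<Rightarrow> real" where
  "hausdorff_dim A = Inf {s. 0 < s \<and> hausdorff_measure s A = 0}"

text \<open>Digits are pairs (i,j); a symbolic sequence omega is 0-indexed: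
  omega k is the (k+1)-st symbol omega_(k+1) of the paper.\<close>

definition digits :: "nat \<Rightarrow> (nat \<Rightarrow> nat) \<Rightarrow> (nat \<times> nat) set" where
  "digits p m = {(i, j). 1 \<le> i \<and> i \<le> p \<and> 1 \<le> j \<and> j \<le> m i}"

definition SigmaLG :: "nat \<Rightarrow> (nat \<Rightarrow> nat) \<Rightarrow> (nat \<Rightarrow> nat \<times> nat) set" where
  "SigmaLG p m = {\<omega>. \<forall>k. \<omega> k \<in> digits p m}"

definition two_dimensional :: "nat \<Rightarrow> (nat \<Rightarrow> nat) \<Rightarrow> bool" where
  "two_dimensional p m \<longleftrightarrow>
     (\<exists>i1 j1 i2 j2. (i1, j1) \<in> digits p m \<and> (i2, j2) \<in> digits p m \<and> i1 = i2 \<and> j1 \<noteq> j2) \<and>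
     (\<exists>i3 j3 i4 j4. (i3, j3) \<in> digits p m \<and> (i4, j4) \<in> digits p m \<and> i3 \<noteq> i4)"

definition LGmap :: "(nat \<Rightarrow> nat \<Rightarrow> real) \<Rightarrow> (nat \<Rightarrow> real) \<Rightarrow> (nat \<Rightarrow> nat \<Rightarrow> real) \<Rightarrow> (nat \<Rightarrow> real)
    \<Rightarrow> nat \<times> nat \<Rightarrow> real \<times> real \<Rightarrow> real \<times> real" where
  "LGmap a b c d ij z = (a (fst ij) (snd ij) * fst z + c (fst ij) (snd ij), b (fst ij) * snd z + d (fst ij))"

primrec cylmap :: "(nat \<Rightarrow> nat \<Rightarrow> real) \<Rightarrow> (nat \<Rightarrow> real) \<Rightarrow> (nat \<Rightarrow> nat \<Rightarrow> real) \<Rightarrow> (nat \<Rightarrow> real)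
    \<Rightarrow> (nat \<Rightarrow> nat \<times> nat) \<Rightarrow> nat \<Rightarrow> real \<times> real \<Rightarrow> real \<times> real" where
  "cylmap a b c d \<omega> 0 = id"
| "cylmap a b c d \<omega> (Suc n) = cylmap a b c d \<omega> n \<circ> LGmap a b c d (\<omega> n)"

definition piLG :: "(nat \<Rightarrow> nat \<Rightarrow> real) \<Rightarrow> (nat \<Rightarrow> real) \<Rightarrow> (nat \<Rightarrow> nat \<Rightarrow> real) \<Rightarrow> (nat \<Rightarrow> real)
    \<Rightarrow> (nat \<Rightarrow> nat \<times> nat) \<Rightarrow> real \<times> real" where
  "piLG a b c d \<omega> = (THE z. \<forall>n. z \<in> cylmap a b c d \<omega> n ` ({0..1} \<times> {0..1}))"

text \<open>prod_b b omega n = prod_(nu=1..n) b_(i_nu); prod_a a omega l = prod_(nu=1..l) a_(i_nu j_nu).\<close>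
definition prod_b :: "(nat \<Rightarrow> real) \<Rightarrow> (nat \<Rightarrow> nat \<times> nat) \<Rightarrow> nat \<Rightarrow> real" where
  "prod_b b \<omega> n = (\<Prod>k<n. b (fst (\<omega> k)))"

definition prod_a :: "(nat \<Rightarrow> nat \<Rightarrow> real) \<Rightarrow> (nat \<Rightarrow> nat \<times> nat) \<Rightarrow> nat \<Rightarrow> real" where
  "prod_a a \<omega> l = (\<Prod>k<l. a (fst (\<omega> k)) (snd (\<omega> k)))"

definition Lfun :: "(nat \<Rightarrow> nat \<Rightarrow> real) \<Rightarrow> (nat \<Rightarrow> real) \<Rightarrow> (nat \<Rightarrow> nat \<times> nat) \<Rightarrow> nat \<Rightarrow> nat" where
  "Lfun a b \<omega> n = (LEAST l. 1 \<le> l \<and> prod_a a \<omega> l \<le> prod_b b \<omega> n)"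

text \<open>Approximate square B_n(omega): first L_n symbols agree, and the first
  coordinates agree for symbols L_n+1..n (paper indexing).\<close>
definition Bset :: "nat \<Rightarrow> (nat \<Rightarrow> nat) \<Rightarrow> (nat \<Rightarrow> nat \<Rightarrow> real) \<Rightarrow> (nat \<Rightarrow> real)
    \<Rightarrow> (nat \<Rightarrow> nat \<times> nat) \<Rightarrow> nat \<Rightarrow> (nat \<Rightarrow> nat \<times> nat) set" where
  "Bset p m a b \<omega> n =
     {\<omega>' \<in> SigmaLG p m. (\<forall>k < Lfun a b \<omega> n. \<omega>' k = \<omega> k) \<and>
        (\<forall>k. Lfun a b \<omega> n \<le> k \<and> k < n \<longrightarrow> fst (\<omega>' k) = fst (\<omega> k))}"

text \<open>The ratio log mu(B_n(omega)) / log prod_(nu=1..n) b_(i_nu), as an extended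
  real; when mu(B_n(omega)) = 0 (log = -infinity) the ratio is +infinity.\<close>
definition loc_ratio :: "(nat \<Rightarrow> nat \<times> nat) measure \<Rightarrow> nat \<Rightarrow> (nat \<Rightarrow> nat) \<Rightarrow> (nat \<Rightarrow> nat \<Rightarrow> real)
    \<Rightarrow> (nat \<Rightarrow> real) \<Rightarrow> (nat \<Rightarrow> nat \<times> nat) \<Rightarrow> nat \<Rightarrow> ereal" where
  "loc_ratio \<mu> p m a b \<omega> n =
     (if measure \<mu> (Bset p m a b \<omega> n) = 0 then \<infinity>
      else ereal (ln (measure \<mu> (Bset p m a b \<omega> n)) / ln (prod_b b \<omega> n)))"

text \<open>Return time R^e_n(omega) = min{l > n : omega_l = e} - n (paper indexing),
  which is infinity if e does not occur after position n.\<close>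
definition return_time :: "(nat \<Rightarrow> nat \<times> nat) \<Rightarrow> nat \<Rightarrow> nat \<times> nat \<Rightarrow> ereal" where
  "return_time \<omega> n e =
     (if \<exists>k\<ge>n. \<omega> k = e then ereal (real (Suc (LEAST k. n \<le> k \<and> \<omega> k = e) - n)) else \<infinity>)"

definition Rmax :: "nat \<Rightarrow> (nat \<Rightarrow> nat) \<Rightarrow> (nat \<Rightarrow> nat \<times> nat) \<Rightarrow> nat \<Rightarrow> ereal" where
  "Rmax p m \<omega> n = Max ((return_time \<omega> n) ` digits p m)"

end

theory Submission
  imports Defs
begin
definition Rp :: "(nat \<Rightarrow> real) \<Rightarrow> nat \<Rightarrow> real" where "Rp r n = (\<Prod>k<n. r k)"
definition Ac :: "(nat \<Rightarrow> real) \<Rightarrow> (nat \<Rightarrow> real) \<Rightarrow> nat \<Rightarrow> real" where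
  "Ac r t n = (\<Sum>k<n. t k * Rp r k)"
definition P1 :: "(nat \<Rightarrow> real) \<Rightarrow> (nat \<Rightarrow> real) \<Rightarrow> real" where
  "P1 r t = (\<Sum>k. t k * Rp r k)"
definition good :: "real \<Rightarrow> (nat \<Rightarrow> real) \<Rightarrow> (nat \<Rightarrow> real) \<Rightarrow> bool" where
  "good q r t \<longleftrightarrow> q < 1 \<and> (\<forall>k. 0 < r k \<and> r k \<le> q \<and> 0 \<le> t k \<and> t k + r k \<le> 1)"
definition shift :: "nat \<Rightarrow> (nat \<Rightarrow> 'a) \<Rightarrow> nat \<Rightarrow> 'a" where "shift n f = (\<lambda>k. f (n + k))"

lemma Rp_0[simp]: "Rp r 0 = 1" by (simp add: Rp_def)
lemma Rp_Suc: "Rp r (Suc n) = Rp r n * r n" by (simp add: Rp_def)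
lemma Ac_0[simp]: "Ac r t 0 = 0" by (simp add: Ac_def)
lemma Ac_Suc: "Ac r t (Suc n) = Ac r t n + t n * Rp r n" by (simp add: Ac_def)

lemma Rp_cong: "(\<And>k. k < n \<Longrightarrow> r' k = r k) \<Longrightarrow> Rp r' n = Rp r n"
  unfolding Rp_def by (rule prod.cong) auto
lemma Ac_cong: "(\<And>k. k < n \<Longrightarrow> r' k = r k \<and> t' k = t k) \<Longrightarrow> Ac r' t' n = Ac r t n"
  unfolding Ac_def by (rule sum.cong) (auto intro!: Rp_cong)

lemma good_shift: "good q r t \<Longrightarrow> good q (shift n r) (shift n t)"
  by (simp add: good_def shift_def)

lemma good_D: assumes "good q r t" shows "0 < r k" "r k \<le> q" "0 \<le> t k" "t k + r k \<le> 1" "q < 1"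
  using assms by (auto simp: good_def)

lemma Rp_pos: "good q r t \<Longrightarrow> 0 < Rp r n"
  by (induction n) (auto simp: Rp_Suc good_def)

lemma Rp_le_pow: "good q r t \<Longrightarrow> Rp r n \<le> q ^ n"
proof (induction n)
  case (Suc n)
  have "Rp r n * r n \<le> q ^ n * q"
    by (rule mult_mono) (use Suc good_D[OF Suc.prems] Rp_pos[OF Suc.prems, of n] in \<open>auto intro: less_imp_le\<close>)
  thus ?case by (simp add: Rp_Suc mult.commute)
qed simp

lemma Rp_mono: assumes "good q r t" "m \<le> n" shows "Rp r n \<le> Rp r m"
  using assms(2)
proof (induction n rule: dec_induct)
  case (step n)
  have "Rp r n * r n \<le> Rp r n * 1"
    by (rule mult_left_mono) (use good_D(1-4)[OF assms(1), of n] Rp_pos[OF assms(1), of n] in auto)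
  thus ?case using step by (simp add: Rp_Suc)
qed simp

lemma Ac_nonneg: "good q r t \<Longrightarrow> 0 \<le> Ac r t n"
  unfolding Ac_def by (intro sum_nonneg mult_nonneg_nonneg) (auto dest: good_D intro: less_imp_le Rp_pos)

lemma Ac_mono: assumes "good q r t" "m \<le> n" shows "Ac r t m \<le> Ac r t n"
  using assms(2)
proof (induction n rule: dec_induct)
  case (step n)
  have "0 \<le> t n * Rp r n" using good_D(3)[OF assms(1), of n] Rp_pos[OF assms(1), of n] by simp
  thus ?case using step by (simp add: Ac_Suc)
qed simp

lemma top_Suc: assumes "good q r t" shows "Ac r t (Suc n) + Rp r (Suc n) \<le> Ac r t n + Rp r n"
proof -
  have "Rp r n * (t n + r n) \<le> Rp r n * 1"
    by (rule mult_left_mono) (use good_D(1-4)[OF assms, of n] Rp_pos[OF assms, of n] in auto)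
  thus ?thesis by (simp add: Ac_Suc Rp_Suc algebra_simps)
qed

lemma top_mono: assumes "good q r t" "m \<le> n" shows "Ac r t n + Rp r n \<le> Ac r t m + Rp r m"
  using assms(2)
proof (induction n rule: dec_induct)
  case (step n)
  thus ?case using top_Suc[OF assms(1), of n] by linarith
qed simp

lemma top_le1: assumes "good q r t" shows "Ac r t n + Rp r n \<le> 1"
  using top_mono[OF assms, of 0 n] by simp

lemma summable_P1: assumes "good q r t" shows "summable (\<lambda>k. t k * Rp r k)"
proof (rule summable_comparison_test[of _ "\<lambda>k. q ^ k"])
  have q: "0 \<le> q" "q < 1" using good_D(1-2)[OF assms, of 0] good_D(5)[OF assms] by auto
  show "\<exists>N. \<forall>n\<ge>N. norm (t n * Rp r n) \<le> q ^ n"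
  proof (intro exI allI impI)
    fix n
    have "t n * Rp r n \<le> 1 * q ^ n"
      by (rule mult_mono) (use good_D(1-4)[OF assms, of n] Rp_le_pow[OF assms, of n] Rp_pos[OF assms, of n] q in auto)
    moreover have "0 \<le> t n * Rp r n" using good_D(1-4)[OF assms, of n] Rp_pos[OF assms, of n] by simp
    ultimately show "norm (t n * Rp r n) \<le> q ^ n" by simp
  qed
  show "summable (\<lambda>k. q ^ k)" using q by simp
qed

lemma Rp_add: "Rp r (j + n) = Rp r n * Rp (shift n r) j"
  by (induction j) (auto simp: Rp_Suc shift_def add.commute)

lemma P1_split: assumes "good q r t"
  shows "P1 r t = Ac r t n + Rp r n * P1 (shift n r) (shift n t)"
proof -
  have s: "summable (\<lambda>k. t k * Rp r k)" by (rule summable_P1[OF assms])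
  have s2: "summable (\<lambda>k. shift n t k * Rp (shift n r) k)" by (rule summable_P1[OF good_shift[OF assms]])
  have "P1 r t = (\<Sum>j. t (j + n) * Rp r (j + n)) + Ac r t n"
    unfolding P1_def Ac_def by (rule suminf_split_initial_segment[OF s])
  also have "(\<lambda>j. t (j + n) * Rp r (j + n)) = (\<lambda>j. Rp r n * (shift n t j * Rp (shift n r) j))"
    by (auto simp: Rp_add shift_def add.commute)
  also have "(\<Sum>j. Rp r n * (shift n t j * Rp (shift n r) j)) = Rp r n * P1 (shift n r) (shift n t)"
    unfolding P1_def by (rule suminf_mult[OF s2])
  finally show ?thesis by simp
qed

lemma P1_bounds: assumes "good q r t" shows "0 \<le> P1 r t" "P1 r t \<le> 1"
proof -
  have s: "summable (\<lambda>k. t k * Rp r k)" by (rule summable_P1[OF assms])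
  show "0 \<le> P1 r t" unfolding P1_def
    by (rule suminf_nonneg[OF s], rule mult_nonneg_nonneg[OF good_D(3)[OF assms] less_imp_le[OF Rp_pos[OF assms]]])
  show "P1 r t \<le> 1" unfolding P1_def
  proof (rule suminf_le_const[OF s])
    fix n show "(\<Sum>k<n. t k * Rp r k) \<le> 1"
      using top_le1[OF assms, of n] Rp_pos[OF assms, of n] by (simp add: Ac_def)
  qed
qed

lemma P1_in: assumes "good q r t"
  shows "Ac r t n \<le> P1 r t" "P1 r t \<le> Ac r t n + Rp r n"
proof -
  note b = P1_bounds[OF good_shift[OF assms, of n]]
  have p: "0 < Rp r n" by (rule Rp_pos[OF assms])
  have "0 \<le> Rp r n * P1 (shift n r) (shift n t)" using b p by simp
  thus "Ac r t n \<le> P1 r t" by (simp add: P1_split[OF assms, of n])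
  have "Rp r n * P1 (shift n r) (shift n t) \<le> Rp r n * 1" by (rule mult_left_mono) (use b p in auto)
  thus "P1 r t \<le> Ac r t n + Rp r n" by (simp add: P1_split[OF assms, of n])
qed

lemma P1_offset: assumes "good q r t"
  shows "Ac r t j + Rp r j * t j \<le> P1 r t" "P1 r t \<le> Ac r t j + Rp r j * (t j + r j)"
  using P1_in[OF assms, of "Suc j"] by (simp_all add: Ac_Suc Rp_Suc algebra_simps)

lemma P1_offset2: assumes "good q r t"
  shows "Rp r j * t j \<le> P1 r t" "Rp r j * (1 - t j - r j) \<le> 1 - P1 r t"
  using P1_offset[OF assms, of j] Ac_nonneg[OF assms, of j] top_le1[OF assms, of j]
  by (simp_all add: algebra_simps)

lemma sep_up: assumes "good q r t" "good q r' t'" "\<And>k. k < K \<Longrightarrow> r' k = r k \<and> t' k = t k"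
  "K < n" "t K + r K \<le> t' K"
  shows "Ac r t n + Rp r n \<le> P1 r' t'"
proof -
  have e1: "Ac r' t' K = Ac r t K" by (rule Ac_cong) (use assms(3) in auto)
  have e2: "Rp r' K = Rp r K" by (rule Rp_cong) (use assms(3) in auto)
  have "Ac r t n + Rp r n \<le> Ac r t (Suc K) + Rp r (Suc K)" by (rule top_mono[OF assms(1)]) (use assms(4) in auto)
  also have "\<dots> = Ac r t K + Rp r K * (t K + r K)" by (simp add: Ac_Suc Rp_Suc algebra_simps)
  also have "\<dots> \<le> Ac r t K + Rp r K * t' K"
    using mult_left_mono[OF assms(5), of "Rp r K"] Rp_pos[OF assms(1), of K] by simp
  also have "\<dots> \<le> P1 r' t'" using P1_offset(1)[OF assms(2), of K] e1 e2 by simp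
  finally show ?thesis .
qed

lemma sep_down: assumes "good q r t" "good q r' t'" "\<And>k. k < K \<Longrightarrow> r' k = r k \<and> t' k = t k"
  "K < n" "t' K + r' K \<le> t K"
  shows "P1 r' t' \<le> Ac r t n"
proof -
  have e1: "Ac r' t' K = Ac r t K" by (rule Ac_cong) (use assms(3) in auto)
  have e2: "Rp r' K = Rp r K" by (rule Rp_cong) (use assms(3) in auto)
  have "P1 r' t' \<le> Ac r t K + Rp r K * (t' K + r' K)" using P1_offset(2)[OF assms(2), of K] e1 e2 by simp
  also have "\<dots> \<le> Ac r t K + Rp r K * t K"
    using mult_left_mono[OF assms(5), of "Rp r K"] Rp_pos[OF assms(1), of K] by simp
  also have "\<dots> = Ac r t (Suc K)" by (simp add: Ac_Suc)
  also have "\<dots> \<le> Ac r t n" by (rule Ac_mono[OF assms(1)]) (use assms(4) in auto)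
  finally show ?thesis .
qed

lemma P1_close: assumes "good q r t" "good q r' t'" "\<And>k. k < n \<Longrightarrow> r' k = r k \<and> t' k = t k"
  shows "\<bar>P1 r' t' - P1 r t\<bar> \<le> Rp r n"
proof -
  have e1: "Ac r' t' n = Ac r t n" by (rule Ac_cong) (use assms(3) in auto)
  have e2: "Rp r' n = Rp r n" by (rule Rp_cong) (use assms(3) in auto)
  show ?thesis using P1_in[OF assms(1), of n] P1_in[OF assms(2), of n] e1 e2 by linarith
qed

lemma Least_cong_bound:
  fixes P P' :: "nat \<Rightarrow> bool"
  assumes "P M'" "M' \<le> M" "\<And>l. l \<le> M \<Longrightarrow> P l = P' l"
  shows "(LEAST l. P' l) = (LEAST l. P l)"
proof -
  let ?L = "LEAST l. P l"
  have L1: "P ?L" by (rule LeastI[of P, OF assms(1)])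
  have L2: "?L \<le> M'" by (rule Least_le[of P, OF assms(1)])
  show ?thesis
  proof (rule Least_equality)
    show "P' ?L" using L1 L2 assms(2,3) by auto
    fix y assume "P' y"
    show "?L \<le> y"
    proof (rule ccontr)
      assume "\<not> ?L \<le> y"
      hence "y < ?L" by simp
      hence "P y" using \<open>P' y\<close> L2 assms(2,3) by auto
      hence "?L \<le> y" by (rule Least_le)
      thus False using \<open>y < ?L\<close> by simp
    qed
  qed
qed

lemma open_det:
  fixes A :: "(nat \<Rightarrow> nat \<times> nat) set"
  assumes "\<And>\<omega> \<omega>'. \<omega> \<in> A \<Longrightarrow> (\<forall>k<M. \<omega>' k = \<omega> k) \<Longrightarrow> \<omega>' \<in> A"
  shows "open A"
proof -
  have cyl: "open {\<omega>'::nat \<Rightarrow> nat \<times> nat. \<omega>' k = v}" for k v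
  proof -
    obtain i j where v: "v = (i, j)" by (cases v)
    have "{v} = {i} \<times> {j}" using v by auto
    moreover have "open ({i} \<times> {j})" by (rule open_Times) (simp_all add: open_discrete)
    ultimately have ov: "open {v}" by simp
    have "open ((\<lambda>x::nat\<Rightarrow>nat\<times>nat. x k) -` {v})"
      by (rule open_vimage[OF ov continuous_on_product_coordinates])
    thus ?thesis by (simp add: vimage_def)
  qed
  have C: "open {\<omega>'. \<forall>k<M. \<omega>' k = \<omega> k}" for \<omega> :: "nat \<Rightarrow> nat \<times> nat"
  proof -
    have "{\<omega>'. \<forall>k<M. \<omega>' k = \<omega> k} = (\<Inter>k\<in>{..<M}. {\<omega>'. \<omega>' k = \<omega> k})" by auto
    thus ?thesis by (simp only:) (intro open_INT finite_lessThan ballI cyl)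
  qed
  have eq: "A = (\<Union>\<omega>\<in>A. {\<omega>'. \<forall>k<M. \<omega>' k = \<omega> k})" using assms by auto
  have "open (\<Union>\<omega>\<in>A. {\<omega>'. \<forall>k<M. \<omega>' k = \<omega> k})" using C by (intro open_UN) auto
  thus ?thesis using eq by simp
qed

lemma digitsD: "(i, j) \<in> digits p m \<Longrightarrow> 1 \<le> i \<and> i \<le> p \<and> 1 \<le> j \<and> j \<le> m i"
  by (simp add: digits_def)

lemma finite_digits: "finite (digits p m)"
proof -
  have "digits p m = (SIGMA i:{1..p}. {1..m i})" by (auto simp: digits_def)
  thus ?thesis by simp
qed

locale LG =
  fixes p :: nat and m :: "nat \<Rightarrow> nat"
    and a c :: "nat \<Rightarrow> nat \<Rightarrow> real" and b d :: "nat \<Rightarrow> real"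
    and \<mu> :: "(nat \<Rightarrow> nat \<times> nat) measure"
  assumes p: "1 \<le> p"
    and m: "\<And>i. 1 \<le> i \<Longrightarrow> i \<le> p \<Longrightarrow> 1 \<le> m i"
    and ab: "\<And>i j. (i, j) \<in> digits p m \<Longrightarrow> 0 < a i j \<and> a i j \<le> b i \<and> b i < 1"
    and d0: "0 \<le> d 1"
    and dmono: "\<And>i. 1 \<le> i \<Longrightarrow> i < p \<Longrightarrow> d i \<le> d (Suc i)"
    and dp: "d p < 1"
    and dgap: "\<And>i. 1 \<le> i \<Longrightarrow> i < p \<Longrightarrow> d (Suc i) - d i \<ge> b i"
    and bdp: "b p + d p \<le> 1"
    and c0: "\<And>i. 1 \<le> i \<Longrightarrow> i \<le> p \<Longrightarrow> 0 \<le> c i 1"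
    and cmono: "\<And>i j. 1 \<le> i \<Longrightarrow> i \<le> p \<Longrightarrow> 1 \<le> j \<Longrightarrow> j < m i \<Longrightarrow> c i j \<le> c i (Suc j)"
    and cm: "\<And>i. 1 \<le> i \<Longrightarrow> i \<le> p \<Longrightarrow> c i (m i) < 1"
    and cgap: "\<And>i j. 1 \<le> i \<Longrightarrow> i \<le> p \<Longrightarrow> 1 \<le> j \<Longrightarrow> j < m i \<Longrightarrow> c i (Suc j) - c i j \<ge> a i j"
    and acm: "\<And>i. 1 \<le> i \<Longrightarrow> i \<le> p \<Longrightarrow> a i (m i) + c i (m i) \<le> 1"
    and fin: "finite_measure \<mu>"
    and borel_mu: "sets \<mu> = sets (restrict_space borel (SigmaLG p m))"
begin

abbreviation "D \<equiv> digits p m"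
abbreviation "Sg \<equiv> SigmaLG p m"

definition ra :: "(nat \<Rightarrow> nat \<times> nat) \<Rightarrow> nat \<Rightarrow> real" where "ra \<omega> k = a (fst (\<omega> k)) (snd (\<omega> k))"
definition tc :: "(nat \<Rightarrow> nat \<times> nat) \<Rightarrow> nat \<Rightarrow> real" where "tc \<omega> k = c (fst (\<omega> k)) (snd (\<omega> k))"
definition rb :: "(nat \<Rightarrow> nat \<times> nat) \<Rightarrow> nat \<Rightarrow> real" where "rb \<omega> k = b (fst (\<omega> k))"
definition td :: "(nat \<Rightarrow> nat \<times> nat) \<Rightarrow> nat \<Rightarrow> real" where "td \<omega> k = d (fst (\<omega> k))"

definition amin :: real where "amin = Min ((\<lambda>e. a (fst e) (snd e)) ` D)"
definition bmax :: real where "bmax = Max ((\<lambda>e. b (fst e)) ` D)"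

lemma one_one: "(1, 1) \<in> D" using p m[of 1] by (simp add: digits_def)

lemma D_ne: "D \<noteq> {}" using one_one by auto

lemma amin_le: "e \<in> D \<Longrightarrow> amin \<le> a (fst e) (snd e)"
  unfolding amin_def by (rule Min_le) (use finite_digits in auto)

lemma b_le_bmax: "e \<in> D \<Longrightarrow> b (fst e) \<le> bmax"
  unfolding bmax_def by (rule Max_ge) (use finite_digits in auto)

lemma amin_pos: "0 < amin"
proof -
  have "amin \<in> (\<lambda>e. a (fst e) (snd e)) ` D" unfolding amin_def
    by (rule Min_in) (use finite_digits D_ne in auto)
  then obtain e where "e \<in> D" "amin = a (fst e) (snd e)" by auto
  thus ?thesis using ab[of "fst e" "snd e"] by auto
qed

lemma bmax_lt1: "bmax < 1"
proof -
  have "bmax \<in> (\<lambda>e. b (fst e)) ` D" unfolding bmax_def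
    by (rule Max_in) (use finite_digits D_ne in auto)
  then obtain e where "e \<in> D" "bmax = b (fst e)" by auto
  thus ?thesis using ab[of "fst e" "snd e"] by auto
qed

lemma amin_le_bmax: "amin \<le> bmax"
  using amin_le[OF one_one] b_le_bmax[OF one_one] ab[OF one_one] by simp

lemma d_le: assumes "1 \<le> i" "i \<le> i'" "i' \<le> p" shows "d i \<le> d i'"
  using assms(2,3)
proof (induction i' rule: dec_induct)
  case (step n) thus ?case using dmono[of n] assms(1) by auto
qed simp

lemma b_pos: "1 \<le> i \<Longrightarrow> i \<le> p \<Longrightarrow> 0 < b i"
  using ab[of i 1] m[of i] by (force simp: digits_def)

lemma d_sep: "1 \<le> i \<Longrightarrow> i < i' \<Longrightarrow> i' \<le> p \<Longrightarrow> d i + b i \<le> d i'"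
  using dgap[of i] d_le[of "Suc i" i'] by auto

lemma d_nonneg: "1 \<le> i \<Longrightarrow> i \<le> p \<Longrightarrow> 0 \<le> d i"
  using d0 d_le[of 1 i] by auto

lemma db_le1: "1 \<le> i \<Longrightarrow> i \<le> p \<Longrightarrow> d i + b i \<le> 1"
proof (cases "i = p")
  case False
  assume "1 \<le> i" "i \<le> p"
  hence "d i + b i \<le> d p" using d_sep[of i p] False by auto
  thus ?thesis using bdp b_pos[of p] p by auto
qed (use bdp in auto)

lemma c_le: assumes "1 \<le> i" "i \<le> p" "1 \<le> j" "j \<le> j'" "j' \<le> m i" shows "c i j \<le> c i j'"
  using assms(4,5)
proof (induction j' rule: dec_induct)
  case (step n) thus ?case using cmono[of i n] assms(1-3) by auto
qed simp

lemma c_sep: "1 \<le> i \<Longrightarrow> i \<le> p \<Longrightarrow> 1 \<le> j \<Longrightarrow> j < j' \<Longrightarrow> j' \<le> m i \<Longrightarrow> c i j + a i j \<le> c i j'"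
  using cgap[of i j] c_le[of i "Suc j" j'] by auto

lemma c_nonneg: "1 \<le> i \<Longrightarrow> i \<le> p \<Longrightarrow> 1 \<le> j \<Longrightarrow> j \<le> m i \<Longrightarrow> 0 \<le> c i j"
  using c0[of i] c_le[of i 1 j] by auto

lemma ca_le1: "1 \<le> i \<Longrightarrow> i \<le> p \<Longrightarrow> 1 \<le> j \<Longrightarrow> j \<le> m i \<Longrightarrow> c i j + a i j \<le> 1"
proof (cases "j = m i")
  case False
  assume "1 \<le> i" "i \<le> p" "1 \<le> j" "j \<le> m i"
  hence "c i j + a i j \<le> c i (m i)" using c_sep[of i j "m i"] False by auto
  moreover have "0 < a i (m i)" using ab[of i "m i"] \<open>1 \<le> i\<close> \<open>i \<le> p\<close> m[of i] by (auto simp: digits_def)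
  ultimately show ?thesis using acm[of i] \<open>1 \<le> i\<close> \<open>i \<le> p\<close> by auto
qed (use acm[of i] in \<open>auto simp: add.commute\<close>)

lemma Sg_D: "\<omega> \<in> Sg \<Longrightarrow> \<omega> k \<in> D" by (simp add: SigmaLG_def)

lemma good_x: assumes "\<omega> \<in> Sg" shows "good bmax (ra \<omega>) (tc \<omega>)"
  unfolding good_def
proof (intro conjI allI bmax_lt1)
  fix k
  obtain i j where e: "\<omega> k = (i, j)" by (cases "\<omega> k")
  have ij: "(i, j) \<in> D" using Sg_D[OF assms, of k] e by simp
  note dd = digitsD[OF ij]
  show "0 < ra \<omega> k" "ra \<omega> k \<le> bmax" "0 \<le> tc \<omega> k" "tc \<omega> k + ra \<omega> k \<le> 1"
    using ab[OF ij] b_le_bmax[OF ij] c_nonneg[of i j] ca_le1[of i j] dd e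
    by (auto simp: ra_def tc_def)
qed

lemma good_y: assumes "\<omega> \<in> Sg" shows "good bmax (rb \<omega>) (td \<omega>)"
  unfolding good_def
proof (intro conjI allI bmax_lt1)
  fix k
  obtain i j where e: "\<omega> k = (i, j)" by (cases "\<omega> k")
  have ij: "(i, j) \<in> D" using Sg_D[OF assms, of k] e by simp
  note dd = digitsD[OF ij]
  show "0 < rb \<omega> k" "rb \<omega> k \<le> bmax" "0 \<le> td \<omega> k" "td \<omega> k + rb \<omega> k \<le> 1"
    using ab[OF ij] b_le_bmax[OF ij] d_nonneg[of i] db_le1[of i] dd e
    by (auto simp: rb_def td_def)
qed

lemma cylmap_eq: "cylmap a b c d \<omega> n (x, y) =
   (Ac (ra \<omega>) (tc \<omega>) n + Rp (ra \<omega>) n * x, Ac (rb \<omega>) (td \<omega>) n + Rp (rb \<omega>) n * y)"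
proof (induction n arbitrary: x y)
  case (Suc n)
  show ?case by (simp add: Suc LGmap_def Ac_Suc Rp_Suc ra_def tc_def rb_def td_def algebra_simps)
qed simp

lemma small_zero: assumes "\<And>n. \<bar>u\<bar> \<le> q ^ n" "0 \<le> q" "q < 1" shows "u = (0::real)"
proof (rule ccontr)
  assume "u \<noteq> 0"
  then obtain n where "q ^ n < \<bar>u\<bar>" using real_arch_pow_inv[of "\<bar>u\<bar>" q] assms(3) by auto
  thus False using assms(1)[of n] by simp
qed

lemma piLG_eq: assumes "\<omega> \<in> Sg"
  shows "piLG a b c d \<omega> = (P1 (ra \<omega>) (tc \<omega>), P1 (rb \<omega>) (td \<omega>))"
  unfolding piLG_def
proof (rule the_equality)
  note gx = good_x[OF assms] and gy = good_y[OF assms]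
  show "\<forall>n. (P1 (ra \<omega>) (tc \<omega>), P1 (rb \<omega>) (td \<omega>)) \<in> cylmap a b c d \<omega> n ` ({0..1} \<times> {0..1})"
  proof
    fix n
    let ?x = "P1 (shift n (ra \<omega>)) (shift n (tc \<omega>))" and ?y = "P1 (shift n (rb \<omega>)) (shift n (td \<omega>))"
    have "(?x, ?y) \<in> {0..1} \<times> {0..1}"
      using P1_bounds[OF good_shift[OF gx]] P1_bounds[OF good_shift[OF gy]] by auto
    moreover have "cylmap a b c d \<omega> n (?x, ?y) = (P1 (ra \<omega>) (tc \<omega>), P1 (rb \<omega>) (td \<omega>))"
      by (simp add: cylmap_eq P1_split[OF gx, of n] P1_split[OF gy, of n])
    ultimately show "(P1 (ra \<omega>) (tc \<omega>), P1 (rb \<omega>) (td \<omega>)) \<in> cylmap a b c d \<omega> n ` ({0..1} \<times> {0..1})"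
      by (metis image_eqI)
  qed
  fix z assume z: "\<forall>n. z \<in> cylmap a b c d \<omega> n ` ({0..1} \<times> {0..1})"
  have bq: "0 \<le> bmax" using amin_pos amin_le_bmax by simp
  have "\<bar>fst z - P1 (ra \<omega>) (tc \<omega>)\<bar> \<le> bmax ^ n \<and> \<bar>snd z - P1 (rb \<omega>) (td \<omega>)\<bar> \<le> bmax ^ n" for n
  proof -
    obtain x y where xy: "x \<in> {0..1}" "y \<in> {0..1}" "z = cylmap a b c d \<omega> n (x, y)" using z by blast
    have "Ac (ra \<omega>) (tc \<omega>) n \<le> Ac (ra \<omega>) (tc \<omega>) n + Rp (ra \<omega>) n * x"
         "Ac (ra \<omega>) (tc \<omega>) n + Rp (ra \<omega>) n * x \<le> Ac (ra \<omega>) (tc \<omega>) n + Rp (ra \<omega>) n"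
      using xy Rp_pos[OF gx, of n] by (auto simp: mult_left_le)
    moreover have "Ac (rb \<omega>) (td \<omega>) n \<le> Ac (rb \<omega>) (td \<omega>) n + Rp (rb \<omega>) n * y"
         "Ac (rb \<omega>) (td \<omega>) n + Rp (rb \<omega>) n * y \<le> Ac (rb \<omega>) (td \<omega>) n + Rp (rb \<omega>) n"
      using xy Rp_pos[OF gy, of n] by (auto simp: mult_left_le)
    ultimately show ?thesis using xy(3) P1_in[OF gx, of n] P1_in[OF gy, of n]
      Rp_le_pow[OF gx, of n] Rp_le_pow[OF gy, of n] by (simp add: cylmap_eq abs_le_iff)
  qed
  hence "fst z - P1 (ra \<omega>) (tc \<omega>) = 0" "snd z - P1 (rb \<omega>) (td \<omega>) = 0"
    using small_zero[OF _ bq bmax_lt1] by blast+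
  thus "z = (P1 (ra \<omega>) (tc \<omega>), P1 (rb \<omega>) (td \<omega>))" by (simp add: prod_eq_iff)
qed

end

lemma Rp_ge_pow: "(\<And>k. q \<le> r k) \<Longrightarrow> 0 \<le> q \<Longrightarrow> q ^ n \<le> Rp r n"
proof (induction n)
  case (Suc n)
  have h: "q ^ n \<le> Rp r n" using Suc by blast
  have "0 \<le> Rp r n" using h zero_le_power[OF Suc.prems(2), of n] by linarith
  have "q ^ n * q \<le> Rp r n * r n"
    by (rule mult_mono) (use h Suc.prems \<open>0 \<le> Rp r n\<close> in auto)
  thus ?case by (simp add: Rp_Suc mult.commute)
qed simp

context LG begin

lemma prod_a_eq: "prod_a a \<omega> l = Rp (ra \<omega>) l" by (simp add: prod_a_def Rp_def ra_def)
lemma prod_b_eq: "prod_b b \<omega> n = Rp (rb \<omega>) n" by (simp add: prod_b_def Rp_def rb_def)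

lemma Lfun_eq: "Lfun a b \<omega> n = (LEAST l. 1 \<le> l \<and> Rp (ra \<omega>) l \<le> Rp (rb \<omega>) n)"
  by (simp add: Lfun_def prod_a_eq prod_b_eq)

lemma Rp_ab: assumes "\<omega> \<in> Sg" shows "Rp (ra \<omega>) k \<le> Rp (rb \<omega>) k"
  unfolding Rp_def
proof (rule prod_mono)
  fix i
  obtain u v where e: "\<omega> i = (u, v)" by (cases "\<omega> i")
  have "(u, v) \<in> D" using Sg_D[OF assms, of i] e by simp
  thus "0 \<le> ra \<omega> i \<and> ra \<omega> i \<le> rb \<omega> i" using ab[of u v] e by (auto simp: ra_def rb_def)
qed

lemma ra_ge: "\<omega> \<in> Sg \<Longrightarrow> amin \<le> ra \<omega> k"
  using amin_le[OF Sg_D[of \<omega> k]] by (simp add: ra_def)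
lemma rb_ge: assumes "\<omega> \<in> Sg" shows "amin \<le> rb \<omega> k"
proof -
  obtain u v where e: "\<omega> k = (u, v)" by (cases "\<omega> k")
  have uv: "(u, v) \<in> D" using Sg_D[OF assms, of k] e by simp
  show ?thesis using ab[OF uv] amin_le[OF uv] e by (simp add: rb_def)
qed

lemma L_props: assumes "\<omega> \<in> Sg"
  shows "1 \<le> Lfun a b \<omega> n" "Rp (ra \<omega>) (Lfun a b \<omega> n) \<le> Rp (rb \<omega>) n" "Lfun a b \<omega> n \<le> max 1 n"
    "\<And>l. 1 \<le> l \<Longrightarrow> l < Lfun a b \<omega> n \<Longrightarrow> Rp (rb \<omega>) n < Rp (ra \<omega>) l"
proof -
  let ?P = "\<lambda>l. 1 \<le> l \<and> Rp (ra \<omega>) l \<le> Rp (rb \<omega>) n"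
  have w: "?P (max 1 n)"
    using Rp_ab[OF assms, of "max 1 n"] Rp_mono[OF good_y[OF assms], of n "max 1 n"] by auto
  have L: "?P (Lfun a b \<omega> n)" unfolding Lfun_eq by (rule LeastI[of ?P, OF w])
  thus "1 \<le> Lfun a b \<omega> n" "Rp (ra \<omega>) (Lfun a b \<omega> n) \<le> Rp (rb \<omega>) n" by auto
  show "Lfun a b \<omega> n \<le> max 1 n" unfolding Lfun_eq by (rule Least_le[of ?P, OF w])
  fix l assume "1 \<le> l" "l < Lfun a b \<omega> n"
  hence "\<not> ?P l" using not_less_Least[of l ?P] unfolding Lfun_eq by blast
  thus "Rp (rb \<omega>) n < Rp (ra \<omega>) l" using \<open>1 \<le> l\<close> by auto
qed

lemma L_ge: assumes "\<omega> \<in> Sg" shows "amin * Rp (rb \<omega>) n \<le> Rp (ra \<omega>) (Lfun a b \<omega> n)"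
proof (cases "Lfun a b \<omega> n = 1")
  case True
  have "Rp (rb \<omega>) n \<le> 1" using Rp_le_pow[OF good_y[OF assms], of n] bmax_lt1 amin_pos amin_le_bmax
    by (meson le_less_trans less_imp_le power_le_one order_trans)
  hence "amin * Rp (rb \<omega>) n \<le> amin" using amin_pos by (simp add: mult_left_le)
  also have "\<dots> \<le> Rp (ra \<omega>) 1" using ra_ge[OF assms, of 0] by (simp add: Rp_def)
  finally show ?thesis using True by simp
next
  case False
  define l where "l = Lfun a b \<omega> n - 1"
  have l: "Lfun a b \<omega> n = Suc l" "1 \<le> l" using L_props(1)[OF assms, of n] False by (auto simp: l_def)
  have "Rp (rb \<omega>) n < Rp (ra \<omega>) l" using L_props(4)[OF assms, of l n] l by simp
  hence "amin * Rp (rb \<omega>) n \<le> ra \<omega> l * Rp (ra \<omega>) l"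
    using ra_ge[OF assms, of l] amin_pos Rp_pos[OF good_y[OF assms], of n]
    by (intro mult_mono) auto
  thus ?thesis using l by (simp add: Rp_Suc mult.commute)
qed

lemma L_lower: assumes "\<omega> \<in> Sg" shows "amin ^ Lfun a b \<omega> n \<le> bmax ^ n"
proof -
  have "amin ^ Lfun a b \<omega> n \<le> Rp (ra \<omega>) (Lfun a b \<omega> n)"
    by (rule Rp_ge_pow) (use ra_ge[OF assms] amin_pos in auto)
  also have "\<dots> \<le> Rp (rb \<omega>) n" by (rule L_props(2)[OF assms])
  also have "\<dots> \<le> bmax ^ n" by (rule Rp_le_pow[OF good_y[OF assms]])
  finally show ?thesis .
qed

lemma L_mono: assumes "\<omega> \<in> Sg" "n \<le> n'" shows "Lfun a b \<omega> n \<le> Lfun a b \<omega> n'"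
proof -
  let ?P = "\<lambda>l. 1 \<le> l \<and> Rp (ra \<omega>) l \<le> Rp (rb \<omega>) n"
  have "?P (Lfun a b \<omega> n')"
    using L_props(1,2)[OF assms(1), of n'] Rp_mono[OF good_y[OF assms(1)] assms(2)] by auto
  thus ?thesis unfolding Lfun_eq[of \<omega> n] by (rule Least_le)
qed

lemma rows_eq: assumes "\<And>k. k < n \<Longrightarrow> fst (\<omega>' k) = fst (\<omega> k)"
  shows "Rp (rb \<omega>') n = Rp (rb \<omega>) n" "Ac (rb \<omega>') (td \<omega>') n = Ac (rb \<omega>) (td \<omega>) n"
  by (rule Rp_cong, simp add: rb_def assms) (rule Ac_cong, simp add: rb_def td_def assms)

lemma digs_eq: assumes "\<And>k. k < n \<Longrightarrow> \<omega>' k = \<omega> k"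
  shows "Rp (ra \<omega>') n = Rp (ra \<omega>) n" "Ac (ra \<omega>') (tc \<omega>') n = Ac (ra \<omega>) (tc \<omega>) n"
  by (rule Rp_cong, simp add: ra_def assms) (rule Ac_cong, simp add: ra_def tc_def assms)

lemma L_cong: assumes "\<omega> \<in> Sg" "\<And>k. k < M \<Longrightarrow> \<omega>' k = \<omega> k" "Lfun a b \<omega> n \<le> M"
  "\<And>k. k < n \<Longrightarrow> fst (\<omega>' k) = fst (\<omega> k)"
  shows "Lfun a b \<omega>' n = Lfun a b \<omega> n"
  unfolding Lfun_eq
proof (rule Least_cong_bound)
  show "1 \<le> Lfun a b \<omega> n \<and> Rp (ra \<omega>) (Lfun a b \<omega> n) \<le> Rp (rb \<omega>) n"
    using L_props(1,2)[OF assms(1)] by auto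
  show "Lfun a b \<omega> n \<le> M" by (rule assms(3))
  fix l assume "l \<le> M"
  have "Rp (ra \<omega>') l = Rp (ra \<omega>) l" by (rule digs_eq) (use assms(2) \<open>l \<le> M\<close> in auto)
  moreover have "Rp (rb \<omega>') n = Rp (rb \<omega>) n" by (rule rows_eq(1)[OF assms(4)])
  ultimately show "(1 \<le> l \<and> Rp (ra \<omega>) l \<le> Rp (rb \<omega>) n) = (1 \<le> l \<and> Rp (ra \<omega>') l \<le> Rp (rb \<omega>') n)"
    by simp
qed

lemma Bset_sub: "Bset p m a b \<omega> n \<subseteq> Sg" by (auto simp: Bset_def)

lemma Bset_self: "\<omega> \<in> Sg \<Longrightarrow> \<omega> \<in> Bset p m a b \<omega> n" by (auto simp: Bset_def)

lemma Bset_mono: assumes "\<omega> \<in> Sg" "n \<le> n'" shows "Bset p m a b \<omega> n' \<subseteq> Bset p m a b \<omega> n"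
proof
  fix \<omega>' assume "\<omega>' \<in> Bset p m a b \<omega> n'"
  hence h: "\<omega>' \<in> Sg" "\<And>k. k < Lfun a b \<omega> n' \<Longrightarrow> \<omega>' k = \<omega> k"
    "\<And>k. Lfun a b \<omega> n' \<le> k \<Longrightarrow> k < n' \<Longrightarrow> fst (\<omega>' k) = fst (\<omega> k)" by (auto simp: Bset_def)
  have LL: "Lfun a b \<omega> n \<le> Lfun a b \<omega> n'" by (rule L_mono[OF assms])
  have A: "\<omega>' k = \<omega> k" if "k < Lfun a b \<omega> n" for k using h(2)[of k] LL that by simp
  have B: "fst (\<omega>' k) = fst (\<omega> k)" if "k < n" for k
  proof (cases "k < Lfun a b \<omega> n'")
    case True thus ?thesis using h(2) by simp
  next
    case False thus ?thesis using h(3)[of k] that assms(2) by simp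
  qed
  show "\<omega>' \<in> Bset p m a b \<omega> n" using h(1) A B by (simp add: Bset_def)
qed

lemma Bset_cong: assumes "\<omega> \<in> Sg" "\<And>k. k < max 1 n \<Longrightarrow> \<omega>' k = \<omega> k"
  shows "Bset p m a b \<omega>' n = Bset p m a b \<omega> n"
proof -
  have L: "Lfun a b \<omega>' n = Lfun a b \<omega> n"
    by (rule L_cong[OF assms(1) assms(2) L_props(3)[OF assms(1)]]) (use assms(2) in auto)
  have e1: "\<omega>' k = \<omega> k" if "k < Lfun a b \<omega> n" for k
    using assms(2)[of k] L_props(3)[OF assms(1), of n] that by simp
  have e2: "\<omega>' k = \<omega> k" if "k < n" for k using assms(2)[of k] that by simp
  show ?thesis unfolding Bset_def L by (auto simp: e1 e2)
qed

lemma Bset_rows: assumes "\<omega> \<in> Sg" "\<omega>' \<in> Bset p m a b \<omega> n" "k < n" shows "fst (\<omega>' k) = fst (\<omega> k)"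
  using assms unfolding Bset_def by (cases "k < Lfun a b \<omega> n") auto

lemma Bset_part: assumes "\<omega> \<in> Sg" "\<omega>' \<in> Bset p m a b \<omega> n"
  shows "Bset p m a b \<omega>' n = Bset p m a b \<omega> n"
proof -
  have L: "Lfun a b \<omega>' n = Lfun a b \<omega> n"
    by (rule L_cong[OF assms(1) _ order_refl Bset_rows[OF assms]]) (use assms(2) in \<open>auto simp: Bset_def\<close>)
  show ?thesis unfolding Bset_def L using assms(2) Bset_rows[OF assms] by (auto simp: Bset_def)
qed

lemma Bset_close: assumes "\<omega> \<in> Sg" "\<omega>' \<in> Bset p m a b \<omega> n"
  shows "\<bar>fst (piLG a b c d \<omega>') - fst (piLG a b c d \<omega>)\<bar> \<le> Rp (ra \<omega>) (Lfun a b \<omega> n)"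
    "\<bar>snd (piLG a b c d \<omega>') - snd (piLG a b c d \<omega>)\<bar> \<le> Rp (rb \<omega>) n"
proof -
  have w: "\<omega>' \<in> Sg" using assms(2) Bset_sub by auto
  show "\<bar>fst (piLG a b c d \<omega>') - fst (piLG a b c d \<omega>)\<bar> \<le> Rp (ra \<omega>) (Lfun a b \<omega> n)"
    unfolding piLG_eq[OF assms(1)] piLG_eq[OF w] fst_conv
    by (rule P1_close[OF good_x[OF assms(1)] good_x[OF w]]) (use assms(2) in \<open>auto simp: Bset_def ra_def tc_def\<close>)
  show "\<bar>snd (piLG a b c d \<omega>') - snd (piLG a b c d \<omega>)\<bar> \<le> Rp (rb \<omega>) n"
    unfolding piLG_eq[OF assms(1)] piLG_eq[OF w] snd_conv
    by (rule P1_close[OF good_y[OF assms(1)] good_y[OF w]]) (use Bset_rows[OF assms] in \<open>auto simp: rb_def td_def\<close>)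
qed

lemma space_mu: "space \<mu> = Sg"
  using sets_eq_imp_space_eq[OF borel_mu] by (simp add: space_restrict_space)

lemma sets_open: "open A \<Longrightarrow> Sg \<inter> A \<in> sets \<mu>"
  unfolding borel_mu sets_restrict_space by auto

lemma Bset_sets: "Bset p m a b \<omega> n \<in> sets \<mu>"
proof -
  let ?L = "Lfun a b \<omega> n"
  let ?A = "{\<omega>'. (\<forall>k<?L. \<omega>' k = \<omega> k) \<and> (\<forall>k. ?L \<le> k \<and> k < n \<longrightarrow> fst (\<omega>' k) = fst (\<omega> k))}"
  have "open ?A" by (rule open_det[where M = "?L + n"]) auto
  moreover have "Bset p m a b \<omega> n = Sg \<inter> ?A" by (auto simp: Bset_def)
  ultimately show ?thesis using sets_open by simp
qed

end

lemma powr_anti_base: fixes q :: real assumes "0 < q" "q \<le> 1" "x \<le> y" shows "q powr y \<le> q powr x"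
proof -
  have "ln q \<le> 0" using ln_le_zero_iff[OF assms(1)] assms(2) by simp
  hence "y * ln q \<le> x * ln q" using assms(3) by (simp add: mult_right_mono_neg)
  thus ?thesis using assms by (simp add: powr_def)
qed

lemma offset_bounds: assumes "good q r t" "\<And>k. w \<le> r k" "0 \<le> w"
  shows "w ^ j * t j \<le> P1 r t" "w ^ j * (1 - t j - r j) \<le> 1 - P1 r t"
proof -
  have pw: "w ^ j \<le> Rp r j" by (rule Rp_ge_pow) (use assms in auto)
  show "w ^ j * t j \<le> P1 r t"
    using mult_right_mono[OF pw good_D(3)[OF assms(1), of j]] P1_offset2(1)[OF assms(1), of j] by simp
  have "0 \<le> 1 - t j - r j" using good_D(4)[OF assms(1), of j] by simp
  thus "w ^ j * (1 - t j - r j) \<le> 1 - P1 r t"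
    using mult_right_mono[OF pw] P1_offset2(2)[OF assms(1), of j] by (meson order_trans)
qed

context LG begin

definition Qc :: "(nat \<Rightarrow> nat \<times> nat) \<Rightarrow> nat \<Rightarrow> real \<Rightarrow> bool" where
  "Qc \<omega> n \<epsilon> \<longleftrightarrow> (\<forall>e\<in>D. \<exists>j. n \<le> j \<and> real j < real n + \<epsilon> * real n \<and> \<omega> j = e)"

lemma Qc_eventually:
  assumes lim: "((\<lambda>n. Rmax p m \<omega> n / ereal (real n)) \<longlonglongrightarrow> 0)" and e: "0 < \<epsilon>"
  shows "eventually (\<lambda>n. Qc \<omega> n \<epsilon>) sequentially"
proof -
  have ev: "eventually (\<lambda>n. Rmax p m \<omega> n / ereal (real n) < ereal \<epsilon>) sequentially"
    using order_tendstoD(2)[OF lim] e by (simp add: zero_ereal_def)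
  show ?thesis
  proof (rule eventually_mono[OF eventually_conj[OF ev eventually_ge_at_top[of 1]]])
    fix n assume h: "Rmax p m \<omega> n / ereal (real n) < ereal \<epsilon> \<and> 1 \<le> n"
    show "Qc \<omega> n \<epsilon>" unfolding Qc_def
    proof
      fix e assume eD: "e \<in> D"
      have le: "return_time \<omega> n e \<le> Rmax p m \<omega> n"
        unfolding Rmax_def by (rule Max_ge) (use finite_digits eD in auto)
      have npos: "0 < real n" using h by simp
      show "\<exists>j. n \<le> j \<and> real j < real n + \<epsilon> * real n \<and> \<omega> j = e"
      proof (cases "\<exists>k\<ge>n. \<omega> k = e")
        case False
        hence "return_time \<omega> n e = \<infinity>" by (simp add: return_time_def)
        hence "Rmax p m \<omega> n = \<infinity>" using le by (simp add: ereal_infty_less_eq)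
        thus ?thesis using h npos by (simp add: ereal_divide_ereal)
      next
        case True
        let ?j = "LEAST k. n \<le> k \<and> \<omega> k = e"
        have j: "n \<le> ?j \<and> \<omega> ?j = e" using True by (metis (mono_tags, lifting) LeastI)
        have rt: "return_time \<omega> n e = ereal (real (Suc ?j - n))"
          using True by (simp add: return_time_def)
        have "0 \<le> return_time \<omega> n e" using rt by simp
        hence "Rmax p m \<omega> n \<noteq> \<infinity>" using h npos by (auto simp: ereal_divide_ereal)
        moreover have "Rmax p m \<omega> n \<noteq> -\<infinity>" using le rt by auto
        ultimately obtain R where R: "Rmax p m \<omega> n = ereal R" by (cases "Rmax p m \<omega> n") auto
        have "R / real n < \<epsilon>" using h R npos by (simp add: ereal_divide)
        hence "R < \<epsilon> * real n" using npos by (simp add: divide_less_eq)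
        moreover have "real (Suc ?j - n) \<le> R" using le rt R by simp
        ultimately have "real (Suc ?j - n) < \<epsilon> * real n" by simp
        hence "real ?j < real n + \<epsilon> * real n" using j by (simp add: of_nat_diff)
        thus ?thesis using j by blast
      qed
    qed
  qed
qed

lemma sep2:
  assumes w: "\<omega> \<in> Sg" and w': "\<omega>' \<in> Sg" and n1: "1 \<le> n"
    and hx: "\<bar>fst (piLG a b c d \<omega>') - fst (piLG a b c d \<omega>)\<bar> <
       Rp (ra \<omega>) (Lfun a b \<omega> n) * min (P1 (shift (Lfun a b \<omega> n) (ra \<omega>)) (shift (Lfun a b \<omega> n) (tc \<omega>)))
                                   (1 - P1 (shift (Lfun a b \<omega> n) (ra \<omega>)) (shift (Lfun a b \<omega> n) (tc \<omega>)))"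
    and hy: "\<bar>snd (piLG a b c d \<omega>') - snd (piLG a b c d \<omega>)\<bar> <
       Rp (rb \<omega>) n * min (P1 (shift n (rb \<omega>)) (shift n (td \<omega>))) (1 - P1 (shift n (rb \<omega>)) (shift n (td \<omega>)))"
  shows "\<omega>' \<in> Bset p m a b \<omega> n"
proof (rule ccontr)
  assume nB: "\<omega>' \<notin> Bset p m a b \<omega> n"
  let ?L = "Lfun a b \<omega> n"
  note gx = good_x[OF w] and gx' = good_x[OF w'] and gy = good_y[OF w] and gy' = good_y[OF w']
  have px: "fst (piLG a b c d \<omega>) = Ac (ra \<omega>) (tc \<omega>) ?L + Rp (ra \<omega>) ?L * P1 (shift ?L (ra \<omega>)) (shift ?L (tc \<omega>))"
    using P1_split[OF gx, of ?L] piLG_eq[OF w] by simp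
  have py: "snd (piLG a b c d \<omega>) = Ac (rb \<omega>) (td \<omega>) n + Rp (rb \<omega>) n * P1 (shift n (rb \<omega>)) (shift n (td \<omega>))"
    using P1_split[OF gy, of n] piLG_eq[OF w] by simp
  have px': "fst (piLG a b c d \<omega>') = P1 (ra \<omega>') (tc \<omega>')" using piLG_eq[OF w'] by simp
  have py': "snd (piLG a b c d \<omega>') = P1 (rb \<omega>') (td \<omega>')" using piLG_eq[OF w'] by simp
  show False
  proof (cases "\<exists>k<n. fst (\<omega>' k) \<noteq> fst (\<omega> k)")
    case True
    let ?K = "LEAST k. k < n \<and> fst (\<omega>' k) \<noteq> fst (\<omega> k)"
    have K: "?K < n" "fst (\<omega>' ?K) \<noteq> fst (\<omega> ?K)" using LeastI_ex[OF True] by auto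
    have Kb: "rb \<omega>' k = rb \<omega> k \<and> td \<omega>' k = td \<omega> k" if "k < ?K" for k
    proof -
      have "\<not> (k < n \<and> fst (\<omega>' k) \<noteq> fst (\<omega> k))" using not_less_Least[OF that] .
      thus ?thesis using that K(1) by (simp add: rb_def td_def)
    qed
    obtain i j where ij: "\<omega> ?K = (i, j)" by (cases "\<omega> ?K")
    obtain i' j' where ij': "\<omega>' ?K = (i', j')" by (cases "\<omega>' ?K")
    have d1: "(i, j) \<in> D" using Sg_D[OF w, of ?K] ij by simp
    have d2: "(i', j') \<in> D" using Sg_D[OF w', of ?K] ij' by simp
    have ii: "i \<noteq> i'" using K(2) ij ij' by simp
    let ?Y = "P1 (shift n (rb \<omega>)) (shift n (td \<omega>))"
    have Rpos: "0 < Rp (rb \<omega>) n" by (rule Rp_pos[OF gy])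
    show False
    proof (cases "i < i'")
      case True
      have "td \<omega> ?K + rb \<omega> ?K \<le> td \<omega>' ?K"
        using d_sep[of i i'] digitsD[OF d1] digitsD[OF d2] True ij ij' by (simp add: rb_def td_def)
      from sep_up[OF gy gy' Kb K(1) this]
      have "Ac (rb \<omega>) (td \<omega>) n + Rp (rb \<omega>) n \<le> snd (piLG a b c d \<omega>')" using py' by simp
      hence "Rp (rb \<omega>) n * (1 - ?Y) \<le> snd (piLG a b c d \<omega>') - snd (piLG a b c d \<omega>)"
        using py by (simp add: algebra_simps)
      moreover have "Rp (rb \<omega>) n * min ?Y (1 - ?Y) \<le> Rp (rb \<omega>) n * (1 - ?Y)"
        using Rpos by (intro mult_left_mono) auto
      ultimately show False using hy by linarith
    next
      case False
      hence "i' < i" using ii by simp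
      have "td \<omega>' ?K + rb \<omega>' ?K \<le> td \<omega> ?K"
        using d_sep[of i' i] digitsD[OF d1] digitsD[OF d2] \<open>i' < i\<close> ij ij' by (simp add: rb_def td_def)
      from sep_down[OF gy gy' Kb K(1) this]
      have "snd (piLG a b c d \<omega>') \<le> Ac (rb \<omega>) (td \<omega>) n" using py' by simp
      hence "Rp (rb \<omega>) n * ?Y \<le> snd (piLG a b c d \<omega>) - snd (piLG a b c d \<omega>')"
        using py by (simp add: algebra_simps)
      moreover have "Rp (rb \<omega>) n * min ?Y (1 - ?Y) \<le> Rp (rb \<omega>) n * ?Y"
        using Rpos by (intro mult_left_mono) auto
      ultimately show False using hy by linarith
    qed
  next
    case False
    hence rows: "fst (\<omega>' k) = fst (\<omega> k)" if "k < n" for k using that by blast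
    have ex: "\<exists>k<?L. \<omega>' k \<noteq> \<omega> k"
    proof (rule ccontr)
      assume "\<not> (\<exists>k<?L. \<omega>' k \<noteq> \<omega> k)"
      hence "\<omega>' \<in> Bset p m a b \<omega> n" using w' rows by (auto simp: Bset_def)
      thus False using nB by simp
    qed
    let ?K = "LEAST k. k < ?L \<and> \<omega>' k \<noteq> \<omega> k"
    have K: "?K < ?L" "\<omega>' ?K \<noteq> \<omega> ?K" using LeastI_ex[OF ex] by auto
    have Kb: "ra \<omega>' k = ra \<omega> k \<and> tc \<omega>' k = tc \<omega> k" if "k < ?K" for k
    proof -
      have "\<not> (k < ?L \<and> \<omega>' k \<noteq> \<omega> k)" using not_less_Least[OF that] .
      thus ?thesis using that K(1) by (simp add: ra_def tc_def)
    qed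
    have KL: "?K < n" using K(1) L_props(3)[OF w, of n] n1 by simp
    obtain i j where ij: "\<omega> ?K = (i, j)" by (cases "\<omega> ?K")
    obtain i' j' where ij': "\<omega>' ?K = (i', j')" by (cases "\<omega>' ?K")
    have d1: "(i, j) \<in> D" using Sg_D[OF w, of ?K] ij by simp
    have d2: "(i', j') \<in> D" using Sg_D[OF w', of ?K] ij' by simp
    have ii: "i' = i" using rows[OF KL] ij ij' by simp
    have jj: "j \<noteq> j'" using K(2) ij ij' ii by simp
    let ?X = "P1 (shift ?L (ra \<omega>)) (shift ?L (tc \<omega>))"
    have Rpos: "0 < Rp (ra \<omega>) ?L" by (rule Rp_pos[OF gx])
    show False
    proof (cases "j < j'")
      case True
      have "tc \<omega> ?K + ra \<omega> ?K \<le> tc \<omega>' ?K"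
        using c_sep[of i j j'] digitsD[OF d1] digitsD[OF d2] True ij ij' ii by (simp add: ra_def tc_def)
      from sep_up[OF gx gx' Kb K(1) this]
      have "Ac (ra \<omega>) (tc \<omega>) ?L + Rp (ra \<omega>) ?L \<le> fst (piLG a b c d \<omega>')" using px' by simp
      hence "Rp (ra \<omega>) ?L * (1 - ?X) \<le> fst (piLG a b c d \<omega>') - fst (piLG a b c d \<omega>)"
        using px by (simp add: algebra_simps)
      moreover have "Rp (ra \<omega>) ?L * min ?X (1 - ?X) \<le> Rp (ra \<omega>) ?L * (1 - ?X)"
        using Rpos by (intro mult_left_mono) auto
      ultimately show False using hx by linarith
    next
      case False
      hence "j' < j" using jj by simp
      have "tc \<omega>' ?K + ra \<omega>' ?K \<le> tc \<omega> ?K"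
        using c_sep[of i j' j] digitsD[OF d1] digitsD[OF d2] \<open>j' < j\<close> ij ij' ii by (simp add: ra_def tc_def)
      from sep_down[OF gx gx' Kb K(1) this]
      have "fst (piLG a b c d \<omega>') \<le> Ac (ra \<omega>) (tc \<omega>) ?L" using px' by simp
      hence "Rp (ra \<omega>) ?L * ?X \<le> fst (piLG a b c d \<omega>) - fst (piLG a b c d \<omega>')"
        using px by (simp add: algebra_simps)
      moreover have "Rp (ra \<omega>) ?L * min ?X (1 - ?X) \<le> Rp (ra \<omega>) ?L * ?X"
        using Rpos by (intro mult_left_mono) auto
      ultimately show False using hx by linarith
    qed
  qed
qed

end

lemma norm_pair_le: "norm (x::real \<times> real) \<le> \<bar>fst x\<bar> + \<bar>snd x\<bar>"
  using sqrt_sum_squares_le_sum_abs[of "norm (fst x)" "norm (snd x)"] by (simp add: norm_prod_def)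

lemma content_le_cover:
  assumes "A \<subseteq> (\<Union>i. U i)" "\<And>i. bounded (U i)" "\<And>i. diameter (U i) \<le> \<delta>"
  shows "hausdorff_content s \<delta> A \<le> (\<Sum>i. ennreal (diameter (U i) powr s))"
  unfolding hausdorff_content_def by (rule INF_lower) (use assms in auto)

lemma hm_zero:
  assumes "\<And>\<delta> e. 0 < \<delta> \<Longrightarrow> 0 < e \<Longrightarrow> hausdorff_content s \<delta> A \<le> ennreal e"
  shows "hausdorff_measure s A = 0"
proof -
  have "hausdorff_content s \<delta> A = 0" if "0 < \<delta>" for \<delta>
  proof -
    have "hausdorff_content s \<delta> A \<le> 0"
      by (rule ennreal_le_epsilon) (use assms that in auto)
    thus ?thesis by simp
  qed
  hence "hausdorff_measure s A \<le> 0" unfolding hausdorff_measure_def by (intro SUP_least) auto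
  thus ?thesis by simp
qed

lemma dim_le:
  assumes "\<And>\<epsilon>. 0 < \<epsilon> \<Longrightarrow> hausdorff_measure (t + \<epsilon>) A = 0" "0 \<le> t"
  shows "hausdorff_dim A \<le> t"
proof (rule field_le_epsilon)
  fix \<epsilon> :: real assume e: "0 < \<epsilon>"
  have "t + \<epsilon> \<in> {s. 0 < s \<and> hausdorff_measure s A = 0}" using assms(1)[OF e] assms(2) e by simp
  moreover have "bdd_below {s. 0 < s \<and> hausdorff_measure s A = 0}"
    by (rule bdd_belowI[of _ 0]) auto
  ultimately show "hausdorff_dim A \<le> t + \<epsilon>" unfolding hausdorff_dim_def by (rule cInf_lower)
qed

lemma dim_ge:
  assumes "\<exists>s>0. hausdorff_measure s A = 0"
    "\<And>s. 0 < s \<Longrightarrow> s < t \<Longrightarrow> hausdorff_measure s A \<noteq> 0"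
  shows "t \<le> hausdorff_dim A"
  unfolding hausdorff_dim_def
proof (rule cInf_greatest)
  show "{s. 0 < s \<and> hausdorff_measure s A = 0} \<noteq> {}" using assms(1) by auto
  fix x assume "x \<in> {s. 0 < s \<and> hausdorff_measure s A = 0}"
  thus "t \<le> x" using assms(2)[of x] by force
qed

lemma grid:
  assumes A: "A \<subseteq> {0..(1::real)} \<times> {0..(1::real)}"
  shows "hausdorff_measure 3 A = 0"
proof (rule hm_zero)
  fix \<delta> e :: real assume d: "0 < \<delta>" and e: "0 < e"
  obtain K :: nat where K: "real K \<ge> max 1 (max (2 / \<delta>) (8 / e))" using real_arch_simple by blast
  have K1: "1 \<le> real K" "2 / \<delta> \<le> real K" "8 / e \<le> real K" using K by auto
  have Kpos: "0 < real K" using K1 by simp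
  define box where "box = (\<lambda>u v::nat. {real u / K .. real (u + 1) / K} \<times> {real v / K .. real (v + 1) / K})"
  define U where "U = (\<lambda>i. if i < K * K then box (i div K) (i mod K) else {})"
  have bU: "bounded (U i)" for i unfolding U_def box_def by (auto intro!: bounded_Times)
  have dbox: "diameter (box u v) \<le> 2 / K" for u v
  proof (rule diameter_le)
    show "box u v \<noteq> {} \<or> 0 \<le> 2 / real K" by simp
    fix x y assume "x \<in> box u v" "y \<in> box u v"
    have e1: "real (w + 1) / K = real w / K + 1 / K" for w by (simp add: add_divide_distrib)
    have ic: "\<bar>p - q\<bar> \<le> w" if "l \<le> p" "p \<le> l + w" "l \<le> q" "q \<le> l + w" for l p q w :: real
      using that by linarith
    from \<open>x \<in> box u v\<close> \<open>y \<in> box u v\<close>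
    have "\<bar>fst x - fst y\<bar> \<le> 1 / K" "\<bar>snd x - snd y\<bar> \<le> 1 / K"
      unfolding box_def e1 by (auto intro!: ic simp: mem_Times_iff)
    thus "norm (x - y) \<le> 2 / K" using norm_pair_le[of "x - y"] by simp
  qed
  have dU: "diameter (U i) \<le> 2 / K" for i using dbox by (simp add: U_def)
  have dU': "diameter (U i) \<le> \<delta>" for i
  proof -
    have "2 / real K \<le> \<delta>" using K1(2) d Kpos by (simp add: divide_simps mult.commute)
    thus ?thesis using dU[of i] by simp
  qed
  have cover: "A \<subseteq> (\<Union>i. U i)"
  proof
    fix z assume "z \<in> A"
    hence z: "0 \<le> fst z" "fst z \<le> 1" "0 \<le> snd z" "snd z \<le> 1" using A by auto
    have cell: "\<exists>u<K. real u / K \<le> x \<and> x \<le> real (u + 1) / K" if "0 \<le> x" "x \<le> 1" for x :: real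
    proof (cases "x = 1")
      case True
      thus ?thesis using K1 by (intro exI[of _ "K - 1"]) (auto simp: of_nat_diff divide_simps)
    next
      case False
      define u where "u = nat \<lfloor>x * K\<rfloor>"
      have "x * K < K" using that False Kpos by simp
      hence "real_of_int \<lfloor>x * K\<rfloor> < real K" using of_int_floor_le[of "x * K"] by linarith
      hence "\<lfloor>x * K\<rfloor> < int K" by linarith
      moreover have "0 \<le> \<lfloor>x * K\<rfloor>" using that Kpos by simp
      ultimately have u1: "u < K" unfolding u_def by (simp add: nat_less_iff)
      have "real u \<le> x * K" "x * K \<le> real u + 1" unfolding u_def using that Kpos
        by (auto simp: of_nat_nat)
      thus ?thesis using u1 Kpos by (intro exI[of _ u]) (auto simp: divide_simps)
    qed
    obtain u where u: "u < K" "real u / K \<le> fst z" "fst z \<le> real (u + 1) / K" using cell z(1,2) by blast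
    obtain v where v: "v < K" "real v / K \<le> snd z" "snd z \<le> real (v + 1) / K" using cell z(3,4) by blast
    have iK: "u * K + v < K * K"
    proof -
      have "u * K + v < u * K + K" using v(1) by simp
      also have "\<dots> = (u + 1) * K" by simp
      also have "\<dots> \<le> K * K" using mult_le_mono1[of "u + 1" K K] u(1) by (simp add: mult.commute)
      finally show ?thesis .
    qed
    have dv: "(u * K + v) div K = u" "(u * K + v) mod K = v" using v(1) by auto
    have "z \<in> U (u * K + v)" unfolding U_def box_def using iK dv u v by (auto simp: mem_Times_iff)
    thus "z \<in> (\<Union>i. U i)" by blast
  qed
  have "hausdorff_content 3 \<delta> A \<le> (\<Sum>i. ennreal (diameter (U i) powr 3))"
    by (rule content_le_cover[OF cover bU dU'])
  also have "\<dots> = (\<Sum>i<K*K. ennreal (diameter (U i) powr 3))"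
    by (rule suminf_finite) (auto simp: U_def)
  also have "\<dots> \<le> (\<Sum>i<K*K. ennreal ((2 / K) powr 3))"
  proof (rule sum_mono)
    fix i
    have "diameter (U i) powr 3 \<le> (2 / K) powr 3"
      by (rule powr_mono2) (use dU[of i] diameter_ge_0[OF bU[of i]] in auto)
    thus "ennreal (diameter (U i) powr 3) \<le> ennreal ((2 / K) powr 3)" by (rule ennreal_leI)
  qed
  also have "\<dots> = ennreal (real (K * K) * (2 / K) powr 3)"
    by (simp add: ennreal_mult' ennreal_of_nat_eq_real_of_nat)
  also have "real (K * K) * (2 / K) powr 3 = 8 / K"
    using Kpos by (simp add: powr_numeral divide_simps power3_eq_cube)
  also have "ennreal (8 / K) \<le> ennreal e"
    using K1(3) e Kpos by (intro ennreal_leI) (simp add: divide_simps mult.commute)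
  finally show "hausdorff_content 3 \<delta> A \<le> ennreal e" .
qed

context LG begin

lemma beta_lt1: assumes "\<omega> \<in> Sg" "1 \<le> n" shows "Rp (rb \<omega>) n < 1"
proof -
  have "Rp (rb \<omega>) n \<le> bmax ^ n" by (rule Rp_le_pow[OF good_y[OF assms(1)]])
  also have "\<dots> \<le> bmax ^ 1" using assms(2) bmax_lt1 amin_pos amin_le_bmax
    by (intro power_decreasing) auto
  finally show ?thesis using bmax_lt1 by simp
qed

lemma ratio_lt: assumes w: "\<omega> \<in> Sg" and n: "1 \<le> n" and lt: "loc_ratio \<mu> p m a b \<omega> n < ereal s"
  shows "Rp (rb \<omega>) n powr s \<le> measure \<mu> (Bset p m a b \<omega> n)"
proof -
  let ?M = "measure \<mu> (Bset p m a b \<omega> n)" and ?B = "Rp (rb \<omega>) n"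
  have M0: "?M \<noteq> 0" using lt by (auto simp: loc_ratio_def)
  hence Mpos: "0 < ?M" using measure_nonneg[of \<mu> "Bset p m a b \<omega> n"] by linarith
  have "ln ?M / ln ?B < s" using lt M0 by (simp add: loc_ratio_def prod_b_eq)
  moreover have Bpos: "0 < ?B" by (rule Rp_pos[OF good_y[OF w]])
  moreover have "ln ?B < 0" using beta_lt1[OF w n] Bpos by simp
  ultimately have "s * ln ?B < ln ?M" by (simp add: divide_less_eq mult.commute)
  hence "exp (s * ln ?B) \<le> exp (ln ?M)" by simp
  thus ?thesis using Mpos Bpos by (simp add: powr_def)
qed

lemma ratio_gt: assumes w: "\<omega> \<in> Sg" and n: "1 \<le> n" and gt: "ereal s < loc_ratio \<mu> p m a b \<omega> n"
  shows "measure \<mu> (Bset p m a b \<omega> n) \<le> Rp (rb \<omega>) n powr s"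
proof (cases "measure \<mu> (Bset p m a b \<omega> n) = 0")
  case True thus ?thesis by simp
next
  case False
  let ?M = "measure \<mu> (Bset p m a b \<omega> n)" and ?B = "Rp (rb \<omega>) n"
  have Mpos: "0 < ?M" using False measure_nonneg[of \<mu> "Bset p m a b \<omega> n"] by linarith
  have "s < ln ?M / ln ?B" using gt False by (simp add: loc_ratio_def prod_b_eq)
  moreover have Bpos: "0 < ?B" by (rule Rp_pos[OF good_y[OF w]])
  moreover have "ln ?B < 0" using beta_lt1[OF w n] Bpos by simp
  ultimately have "ln ?M < s * ln ?B" by (simp add: less_divide_eq mult.commute)
  hence "exp (ln ?M) \<le> exp (s * ln ?B)" by simp
  thus ?thesis using Mpos Bpos by (simp add: powr_def)
qed

lemma pi_in_square: "\<omega> \<in> Sg \<Longrightarrow> piLG a b c d \<omega> \<in> {0..1} \<times> {0..1}"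
  using P1_bounds[OF good_x] P1_bounds[OF good_y] by (simp add: piLG_eq)

lemma bounded_pi: assumes "A \<subseteq> Sg" shows "bounded (piLG a b c d ` A)"
proof (rule bounded_subset[of "{0..1} \<times> {0..1}"])
  show "bounded ({0..1::real} \<times> {0..1::real})" by (intro bounded_Times bounded_closed_interval)
  show "piLG a b c d ` A \<subseteq> {0..1} \<times> {0..1}" using assms pi_in_square by blast
qed

lemma diam_Bset: assumes w: "\<omega> \<in> Sg"
  shows "diameter (piLG a b c d ` Bset p m a b \<omega> n) \<le> 2 * Rp (rb \<omega>) n"
proof (rule diameter_le)
  show "piLG a b c d ` Bset p m a b \<omega> n \<noteq> {} \<or> 0 \<le> 2 * Rp (rb \<omega>) n"
    using Rp_pos[OF good_y[OF w]] by (simp add: less_imp_le)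
  fix x y assume "x \<in> piLG a b c d ` Bset p m a b \<omega> n" "y \<in> piLG a b c d ` Bset p m a b \<omega> n"
  then obtain w1 w2 where ww: "w1 \<in> Bset p m a b \<omega> n" "w2 \<in> Bset p m a b \<omega> n"
    "x = piLG a b c d w1" "y = piLG a b c d w2" by auto
  have w1: "w1 \<in> Sg" using ww(1) Bset_sub by auto
  have eq: "Bset p m a b w1 n = Bset p m a b \<omega> n" by (rule Bset_part[OF w ww(1)])
  have w2: "w2 \<in> Bset p m a b w1 n" using ww(2) eq by simp
  note cl = Bset_close[OF w1 w2]
  have "Rp (ra w1) (Lfun a b w1 n) \<le> Rp (rb w1) n" by (rule L_props(2)[OF w1])
  moreover have "Rp (rb w1) n = Rp (rb \<omega>) n" by (rule rows_eq(1)) (use Bset_rows[OF w ww(1)] in auto)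
  ultimately have "\<bar>fst (x - y)\<bar> \<le> Rp (rb \<omega>) n" "\<bar>snd (x - y)\<bar> \<le> Rp (rb \<omega>) n"
    using cl ww(3,4) by (simp_all add: abs_minus_commute)
  thus "norm (x - y) \<le> 2 * Rp (rb \<omega>) n" using norm_pair_le[of "x - y"] by simp
qed

lemma Bset_eq_ext: assumes "\<omega> \<in> Sg"
  shows "Bset p m a b \<omega> n = (\<lambda>(n, xs). Bset p m a b (\<lambda>k. if k < length xs then xs ! k else (1, 1)) n)
     (n, map \<omega> [0..<max 1 n])"
  by (simp, rule Bset_cong[OF assms, symmetric]) simp

lemma countable_Bsets: "countable {Bset p m a b \<omega> n | \<omega> n. \<omega> \<in> Sg}"
proof -
  have "{Bset p m a b \<omega> n | \<omega> n. \<omega> \<in> Sg} \<subseteq>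
    (\<lambda>(n, xs). Bset p m a b (\<lambda>k. if k < length xs then xs ! k else (1, 1)) n) ` UNIV"
    using Bset_eq_ext by blast
  thus ?thesis by (rule countable_subset) simp
qed

lemma upper_cover:
  assumes S: "S \<subseteq> Sg" and s: "0 < s1" "s1 < s2"
    and freq: "\<And>\<omega> N. \<omega> \<in> S \<Longrightarrow> \<exists>n\<ge>N. Rp (rb \<omega>) n powr s1 \<le> measure \<mu> (Bset p m a b \<omega> n)"
  shows "hausdorff_measure s2 (piLG a b c d ` S) = 0"
proof (rule hm_zero)
  fix \<delta> e :: real assume d: "0 < \<delta>" and e: "0 < e"
  define Mt where "Mt = measure \<mu> (space \<mu>)"
  have Mt0: "0 \<le> Mt" by (simp add: Mt_def)
  define y where "y = min (\<delta> / 2) ((e / (2 powr s2 * (Mt + 1))) powr (1 / (s2 - s1)))"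
  have ypos: "0 < y" using d e Mt0 by (simp add: y_def)
  obtain N where N: "bmax ^ N < y" using real_arch_pow_inv[OF ypos bmax_lt1] by blast
  have bN0: "0 \<le> bmax ^ N" using amin_pos amin_le_bmax by simp
  define CN where "CN = 2 powr s2 * (bmax ^ N) powr (s2 - s1)"
  have CN0: "0 \<le> CN" by (simp add: CN_def)
  have CNe: "CN * Mt \<le> e"
  proof -
    have "(bmax ^ N) powr (s2 - s1) \<le> y powr (s2 - s1)"
      by (rule powr_mono2) (use s N bN0 in auto)
    also have "\<dots> \<le> ((e / (2 powr s2 * (Mt + 1))) powr (1 / (s2 - s1))) powr (s2 - s1)"
      by (rule powr_mono2) (use s ypos in \<open>auto simp: y_def\<close>)
    also have "\<dots> = e / (2 powr s2 * (Mt + 1))" using s e Mt0 by (simp add: powr_powr)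
    finally have h: "(bmax ^ N) powr (s2 - s1) \<le> e / (2 powr s2 * (Mt + 1))" .
    have "CN \<le> 2 powr s2 * (e / (2 powr s2 * (Mt + 1)))" unfolding CN_def
      by (rule mult_left_mono[OF h]) simp
    also have "\<dots> = e / (Mt + 1)" by simp
    finally have "CN \<le> e / (Mt + 1)" .
    hence "CN * Mt \<le> e / (Mt + 1) * Mt" using Mt0 by (rule mult_right_mono)
    also have "\<dots> \<le> e" using e Mt0 by (simp add: divide_simps)
    finally show ?thesis .
  qed
  have ex: "\<exists>n. N \<le> n \<and> Rp (rb \<omega>) n powr s1 \<le> measure \<mu> (Bset p m a b \<omega> n)" if "\<omega> \<in> S" for \<omega>
    using freq[OF that, of N] by blast
  define nn where "nn = (\<lambda>\<omega>. LEAST n. N \<le> n \<and> Rp (rb \<omega>) n powr s1 \<le> measure \<mu> (Bset p m a b \<omega> n))"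
  have nnP: "N \<le> nn \<omega> \<and> Rp (rb \<omega>) (nn \<omega>) powr s1 \<le> measure \<mu> (Bset p m a b \<omega> (nn \<omega>))" if "\<omega> \<in> S" for \<omega>
    unfolding nn_def by (rule LeastI_ex[OF ex[OF that]])
  define Ms where "Ms = (\<lambda>\<omega>. Bset p m a b \<omega> (nn \<omega>))"
  have key: "Ms w2 = Ms w1" if w12: "w1 \<in> S" "w2 \<in> S" "nn w1 \<le> nn w2" "z \<in> Ms w1" "z \<in> Ms w2" for w1 w2 z
  proof -
    have s1': "w1 \<in> Sg" "w2 \<in> Sg" using w12 S by auto
    have z: "z \<in> Sg" using w12(4) Bset_sub unfolding Ms_def by auto
    have e2: "Bset p m a b z (nn w2) = Ms w2" unfolding Ms_def by (rule Bset_part[OF s1'(2) w12(5)[unfolded Ms_def]])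
    have e1: "Bset p m a b z (nn w1) = Ms w1" unfolding Ms_def by (rule Bset_part[OF s1'(1) w12(4)[unfolded Ms_def]])
    have "Ms w2 \<subseteq> Ms w1" using Bset_mono[OF z w12(3)] e1 e2 by simp
    hence w2in: "w2 \<in> Bset p m a b w1 (nn w1)" using Bset_self[OF s1'(2)] unfolding Ms_def by blast
    have eb: "Bset p m a b w2 (nn w1) = Bset p m a b w1 (nn w1)" by (rule Bset_part[OF s1'(1) w2in])
    have er: "Rp (rb w2) (nn w1) = Rp (rb w1) (nn w1)" by (rule rows_eq(1)) (use Bset_rows[OF s1'(1) w2in] in auto)
    have "N \<le> nn w1 \<and> Rp (rb w2) (nn w1) powr s1 \<le> measure \<mu> (Bset p m a b w2 (nn w1))"
      using nnP[OF w12(1)] eb er by simp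
    hence "nn w2 \<le> nn w1" unfolding nn_def by (rule Least_le) 
    hence "nn w2 = nn w1" using w12(3) by simp
    thus ?thesis unfolding Ms_def using eb by simp
  qed
  have disj: "Ms w1 = Ms w2 \<or> Ms w1 \<inter> Ms w2 = {}" if "w1 \<in> S" "w2 \<in> S" for w1 w2
  proof (cases "Ms w1 \<inter> Ms w2 = {}")
    case False
    then obtain z where "z \<in> Ms w1" "z \<in> Ms w2" by blast
    thus ?thesis using key[of w1 w2 z] key[of w2 w1 z] that by (cases "nn w1 \<le> nn w2") auto
  qed simp
  define MM where "MM = Ms ` S"
  have cMM: "countable MM"
    by (rule countable_subset[OF _ countable_Bsets]) (use S in \<open>auto simp: MM_def Ms_def\<close>)
  define U where "U = (\<lambda>k. if k \<in> to_nat_on MM ` MM then from_nat_into MM k else {})"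
  have UMM: "k \<in> to_nat_on MM ` MM \<Longrightarrow> U k \<in> MM" for k
    unfolding U_def by (auto intro!: from_nat_into)
  have Usets: "U k \<in> sets \<mu>" for k
  proof (cases "k \<in> to_nat_on MM ` MM")
    case True
    then obtain \<omega> where "U k = Ms \<omega>" using UMM[OF True] by (auto simp: MM_def)
    thus ?thesis using Bset_sets by (simp add: Ms_def)
  qed (simp add: U_def)
  have Udisj: "disjoint_family U"
    unfolding disjoint_family_on_def
  proof (intro ballI impI)
    fix k k' :: nat assume kk: "k \<noteq> k'"
    show "U k \<inter> U k' = {}"
    proof (cases "k \<in> to_nat_on MM ` MM \<and> k' \<in> to_nat_on MM ` MM")
      case True
      have ne: "U k \<noteq> U k'" using kk True from_nat_into_inj[OF cMM] by (simp add: U_def)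
      obtain w1 where "w1 \<in> S" "U k = Ms w1" using UMM True by (force simp: MM_def)
      moreover obtain w2 where "w2 \<in> S" "U k' = Ms w2" using UMM True by (force simp: MM_def)
      ultimately show ?thesis using disj ne by metis
    qed (auto simp: U_def)
  qed
  have Ucov: "\<exists>k. \<omega> \<in> U k" if "\<omega> \<in> S" for \<omega>
  proof
    have "Ms \<omega> \<in> MM" using that by (simp add: MM_def)
    hence "U (to_nat_on MM (Ms \<omega>)) = Ms \<omega>" unfolding U_def using from_nat_into_to_nat_on[OF cMM] by auto
    thus "\<omega> \<in> U (to_nat_on MM (Ms \<omega>))" using Bset_self that S by (auto simp: Ms_def)
  qed
  define W where "W = (\<lambda>k. piLG a b c d ` U k)"
  have Wb: "bounded (W k)" for k
    unfolding W_def by (rule bounded_pi) (use Usets sets.sets_into_space space_mu in blast)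
  have Wd: "diameter (W k) \<le> 2 * bmax ^ N \<and>
      ennreal (diameter (W k) powr s2) \<le> ennreal CN * emeasure \<mu> (U k)" for k
  proof (cases "k \<in> to_nat_on MM ` MM")
    case False thus ?thesis using bN0 s by (simp add: W_def U_def)
  next
    case True
    obtain \<omega> where w: "\<omega> \<in> S" "U k = Ms \<omega>" using UMM[OF True] by (auto simp: MM_def)
    have wS: "\<omega> \<in> Sg" using w S by auto
    let ?B = "Rp (rb \<omega>) (nn \<omega>)"
    have Bpos: "0 < ?B" by (rule Rp_pos[OF good_y[OF wS]])
    have b0: "0 \<le> bmax" using amin_pos amin_le_bmax by simp
    have "bmax ^ nn \<omega> \<le> bmax ^ N"
      by (rule power_decreasing) (use nnP[OF w(1)] b0 bmax_lt1 in auto)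
    hence BN: "?B \<le> bmax ^ N"
      using Rp_le_pow[OF good_y[OF wS], of "nn \<omega>"] by linarith
    have dW: "diameter (W k) \<le> 2 * ?B" unfolding W_def w(2) Ms_def by (rule diam_Bset[OF wS])
    have "diameter (W k) powr s2 \<le> (2 * ?B) powr s2"
      by (rule powr_mono2) (use s dW diameter_ge_0[OF Wb] in auto)
    also have "\<dots> = 2 powr s2 * ?B powr (s2 - s1) * ?B powr s1"
      using Bpos by (simp add: powr_mult powr_add[symmetric])
    also have "\<dots> \<le> 2 powr s2 * (bmax ^ N) powr (s2 - s1) * measure \<mu> (U k)"
    proof (intro mult_mono)
      show "?B powr (s2 - s1) \<le> (bmax ^ N) powr (s2 - s1)" by (rule powr_mono2) (use s Bpos BN in auto)
      show "?B powr s1 \<le> measure \<mu> (U k)" using nnP[OF w(1)] w(2) by (simp add: Ms_def)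
    qed auto
    finally have "diameter (W k) powr s2 \<le> CN * measure \<mu> (U k)" by (simp add: CN_def)
    hence "ennreal (diameter (W k) powr s2) \<le> ennreal (CN * measure \<mu> (U k))" by (rule ennreal_leI)
    also have "\<dots> = ennreal CN * emeasure \<mu> (U k)"
      using CN0 finite_measure.emeasure_eq_measure[OF fin] by (simp add: ennreal_mult)
    finally show ?thesis using dW BN by simp
  qed
  have cover: "piLG a b c d ` S \<subseteq> (\<Union>k. W k)" using Ucov unfolding W_def by blast
  have "hausdorff_content s2 \<delta> (piLG a b c d ` S) \<le> (\<Sum>k. ennreal (diameter (W k) powr s2))"
  proof (rule content_le_cover[OF cover Wb])
    fix k
    have "2 * bmax ^ N \<le> \<delta>" using N by (simp add: y_def)
    thus "diameter (W k) \<le> \<delta>" using Wd[of k] by simp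
  qed
  also have "\<dots> \<le> (\<Sum>k. ennreal CN * emeasure \<mu> (U k))"
    by (rule suminf_le) (use Wd in auto)
  also have "\<dots> = ennreal CN * emeasure \<mu> (\<Union>k. U k)"
  proof -
    have "range U \<subseteq> sets \<mu>" using Usets by auto
    from suminf_emeasure[OF this Udisj] show ?thesis by (simp add: ennreal_suminf_cmult)
  qed
  also have "\<dots> \<le> ennreal CN * emeasure \<mu> (space \<mu>)"
    by (intro mult_left_mono emeasure_mono) (use Usets sets.sets_into_space in auto)
  also have "\<dots> = ennreal (CN * Mt)"
    using finite_measure.emeasure_eq_measure[OF fin] CN0 by (simp add: Mt_def ennreal_mult)
  also have "\<dots> \<le> ennreal e" using CNe by (rule ennreal_leI)
  finally show "hausdorff_content s2 \<delta> (piLG a b c d ` S) \<le> ennreal e" .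
qed

theorem partB:
  assumes "0 \<le> t" "S \<subseteq> Sg" "\<forall>\<omega>\<in>S. liminf (loc_ratio \<mu> p m a b \<omega>) \<le> ereal t"
  shows "hausdorff_dim (piLG a b c d ` S) \<le> t"
proof (rule dim_le[OF _ assms(1)])
  fix \<epsilon> :: real assume e: "0 < \<epsilon>"
  show "hausdorff_measure (t + \<epsilon>) (piLG a b c d ` S) = 0"
  proof (rule upper_cover[OF assms(2), of "t + \<epsilon> / 2"])
    show "0 < t + \<epsilon> / 2" "t + \<epsilon> / 2 < t + \<epsilon>" using e assms(1) by auto
    fix \<omega> N assume w: "\<omega> \<in> S"
    have "liminf (loc_ratio \<mu> p m a b \<omega>) < ereal (t + \<epsilon> / 2)"
      using assms(3) w e by (meson ereal_less(3) half_gt_zero le_less_trans less_add_same_cancel1 less_ereal.simps(1))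
    then obtain n where n: "n > max N 1" "loc_ratio \<mu> p m a b \<omega> n < ereal (t + \<epsilon> / 2)"
      using liminf_upper_bound by blast
    have "Rp (rb \<omega>) n powr (t + \<epsilon> / 2) \<le> measure \<mu> (Bset p m a b \<omega> n)"
      by (rule ratio_lt[OF _ _ n(2)]) (use w assms(2) n(1) in auto)
    thus "\<exists>n\<ge>N. Rp (rb \<omega>) n powr (t + \<epsilon> / 2) \<le> measure \<mu> (Bset p m a b \<omega> n)"
      using n(1) less_imp_le by (metis max.strict_boundedE)
  qed
qed

end

context LG begin

lemma two_dim_facts: assumes "two_dimensional p m"
  obtains i0 where "1 \<le> i0" "i0 \<le> p" "2 \<le> m i0" "2 \<le> p"
proof -
  from assms obtain i1 j1 j2 where h1: "(i1, j1) \<in> D" "(i1, j2) \<in> D" "j1 \<noteq> j2"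
    unfolding two_dimensional_def by blast
  from assms obtain i3 j3 i4 j4 where h2: "(i3, j3) \<in> D" "(i4, j4) \<in> D" "i3 \<noteq> i4"
    unfolding two_dimensional_def by blast
  have "2 \<le> m i1" using h1 by (auto simp: digits_def)
  moreover have "2 \<le> p" using h2 by (auto simp: digits_def)
  ultimately show ?thesis using that h1 by (auto simp: digits_def)
qed

lemma sets_det:
  assumes "A \<subseteq> Sg" "\<And>\<omega> \<omega>'. \<omega> \<in> A \<Longrightarrow> \<omega>' \<in> Sg \<Longrightarrow> (\<forall>k<M. \<omega>' k = \<omega> k) \<Longrightarrow> \<omega>' \<in> A"
  shows "A \<in> sets \<mu>"
proof -
  let ?O = "\<Union>\<omega>\<in>A. {\<omega>'. \<forall>k<M. \<omega>' k = \<omega> k}"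
  have "open ?O" by (rule open_det[where M = M]) auto
  hence op: "Sg \<inter> ?O \<in> sets \<mu>" by (rule sets_open)
  have eq: "A = Sg \<inter> ?O" using assms by auto
  show ?thesis by (subst eq) (rule op)
qed

lemma L_big: assumes w: "\<omega> \<in> Sg" and n: "real N \<le> real n * (ln bmax / ln amin)"
  shows "N \<le> Lfun a b \<omega> n"
proof -
  have la: "ln amin < 0" using amin_pos amin_le_bmax bmax_lt1 by simp
  have "amin ^ Lfun a b \<omega> n \<le> bmax ^ n" by (rule L_lower[OF w])
  moreover have "0 < amin ^ Lfun a b \<omega> n" "0 < bmax ^ n" using amin_pos amin_le_bmax by auto
  ultimately have "ln (amin ^ Lfun a b \<omega> n) \<le> ln (bmax ^ n)" by simp
  hence "real (Lfun a b \<omega> n) * ln amin \<le> real n * ln bmax" using amin_pos amin_le_bmax by (simp add: ln_realpow)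
  hence "real n * ln bmax / ln amin \<le> real (Lfun a b \<omega> n)" using la by (simp add: divide_le_eq)
  thus ?thesis using n by simp
qed

lemma cover_one:
  assumes w: "\<omega> \<in> Sg" and i0: "1 \<le> i0" "i0 \<le> p" "2 \<le> m i0" and p2: "2 \<le> p"
    and kap: "\<kappa> = min (min (c i0 2) (1 - c i0 1 - a i0 1)) (min (d 2) (1 - d 1 - b 1))"
    and N': "N \<le> N'" "1 \<le> N'" "\<And>n. N' \<le> n \<Longrightarrow> N \<le> Lfun a b \<omega> n"
    and good: "\<And>n. N \<le> n \<Longrightarrow> Qc \<omega> n \<epsilon> \<and> measure \<mu> (Bset p m a b \<omega> n) \<le> Rp (rb \<omega>) n powr s'"
    and par: "0 < \<eta>" "0 < \<epsilon>" "\<epsilon> * ln amin = \<eta> * ln bmax" "s' = (1 + \<eta>) * s" "0 < s"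
    and rho: "0 < \<rho>" "\<rho> < \<kappa> * amin * (amin ^ N') powr (1 + \<eta>)"
  shows "\<exists>n. (\<forall>\<omega>'\<in>Sg. dist (piLG a b c d \<omega>') (piLG a b c d \<omega>) \<le> \<rho> \<longrightarrow> \<omega>' \<in> Bset p m a b \<omega> n) \<and>
             measure \<mu> (Bset p m a b \<omega> n) \<le> (\<kappa> * amin powr (2 + \<eta>)) powr (- s) * \<rho> powr s"
proof -
  note gx = good_x[OF w] and gy = good_y[OF w]
  have am: "0 < amin" "amin \<le> 1" using amin_pos amin_le_bmax bmax_lt1 by auto
  have b0: "0 \<le> bmax" using am amin_le_bmax by simp
  have D1: "(i0, 1) \<in> D" "(i0, 2) \<in> D" "(1, 1) \<in> D" "(2, 1) \<in> D"
    using i0 p2 m[of 1] m[of 2] by (auto simp: digits_def)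
  have cpos: "0 < c i0 2" using c_sep[of i0 1 2] c_nonneg[of i0 1] ab[OF D1(1)] i0 by auto
  have c2: "0 < 1 - c i0 1 - a i0 1"
    using c_sep[of i0 1 2] c_le[of i0 2 "m i0"] cm[of i0] i0 by auto
  have dpos: "0 < d 2" using d_sep[of 1 2] d_nonneg[of 1] b_pos[of 1] p2 by auto
  have d2: "0 < 1 - d 1 - b 1" using d_sep[of 1 2] d_le[of 2 p] dp p2 by auto
  have kpos: "0 < \<kappa>" using kap cpos c2 dpos d2 by simp
  define \<beta> where "\<beta> = Rp (rb \<omega>)"
  have bpos: "0 < \<beta> k" for k unfolding \<beta>_def by (rule Rp_pos[OF gy])
  define g where "g = (\<lambda>k. \<kappa> * amin * \<beta> k powr (1 + \<eta>))"
  define K where "K = {k. \<rho> < g k}"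
  have NK: "N' \<in> K"
  proof -
    have h: "amin ^ N' \<le> \<beta> N'" unfolding \<beta>_def by (rule Rp_ge_pow) (use rb_ge[OF w] am in auto)
    have "(amin ^ N') powr (1 + \<eta>) \<le> \<beta> N' powr (1 + \<eta>)" by (rule powr_mono2) (use h par am in auto)
    hence "\<kappa> * amin * (amin ^ N') powr (1 + \<eta>) \<le> g N'" unfolding g_def using kpos am by simp
    thus ?thesis using rho by (simp add: K_def)
  qed
  define y0 where "y0 = (\<rho> / (\<kappa> * amin)) powr (1 / (1 + \<eta>))"
  have y0: "0 < y0" using rho kpos am by (simp add: y0_def)
  obtain k0 where k0: "bmax ^ k0 < y0" using real_arch_pow_inv[OF y0 bmax_lt1] by blast
  have Kb: "K \<subseteq> {..<k0}"
  proof
    fix k assume "k \<in> K"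
    show "k \<in> {..<k0}"
    proof (rule ccontr)
      assume "k \<notin> {..<k0}"
      hence kk: "k0 \<le> k" by simp
      have "\<beta> k \<le> bmax ^ k" unfolding \<beta>_def by (rule Rp_le_pow[OF gy])
      also have "\<dots> \<le> bmax ^ k0" by (rule power_decreasing[OF kk b0]) (use bmax_lt1 in simp)
      finally have "\<beta> k < y0" using k0 by simp
      hence hh: "\<beta> k \<le> y0" by simp
      have "\<beta> k powr (1 + \<eta>) \<le> y0 powr (1 + \<eta>)" by (rule powr_mono2) (use hh bpos[of k] par in auto)
      also have "\<dots> = \<rho> / (\<kappa> * amin)" unfolding y0_def using rho kpos am par by (simp add: powr_powr)
      finally have "g k \<le> \<rho>" unfolding g_def using kpos am by (simp add: field_simps)
      thus False using \<open>k \<in> K\<close> by (simp add: K_def)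
    qed
  qed
  have fK: "finite K" using Kb finite_subset by blast
  define n where "n = Max K"
  have nK: "n \<in> K" unfolding n_def by (rule Max_in[OF fK]) (use NK in auto)
  have Nn: "N' \<le> n" unfolding n_def by (rule Max_ge[OF fK NK])
  have Sn: "Suc n \<notin> K" using Max_ge[OF fK, of "Suc n"] by (auto simp: n_def)
  have n1: "1 \<le> n" "N \<le> n" using Nn N' by auto
  define L where "L = Lfun a b \<omega> n"
  have LN: "N \<le> L" unfolding L_def by (rule N'(3)[OF Nn])
  have Ln: "L \<le> n" using L_props(3)[OF w, of n] n1 unfolding L_def by simp
  have gn: "\<rho> < g n" using nK by (simp add: K_def)
  have E: "\<beta> n powr \<eta> \<le> amin powr (\<epsilon> * real n)"
  proof -
    have "amin powr (\<epsilon> * real n) = exp (real n * (\<epsilon> * ln amin))" using am by (simp add: powr_def algebra_simps)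
    also have "\<dots> = bmax powr (\<eta> * real n)" using par(3) am amin_le_bmax by (simp add: powr_def algebra_simps)
    also have "bmax powr (\<eta> * real n) = (bmax ^ n) powr \<eta>"
      using am amin_le_bmax by (simp add: powr_realpow[symmetric] powr_powr mult.commute)
    finally have e: "amin powr (\<epsilon> * real n) = (bmax ^ n) powr \<eta>" .
    have hh: "\<beta> n \<le> bmax ^ n" unfolding \<beta>_def by (rule Rp_le_pow[OF gy])
    have "\<beta> n powr \<eta> \<le> (bmax ^ n) powr \<eta>" by (rule powr_mono2) (use hh bpos[of n] par in auto)
    thus ?thesis using e by simp
  qed
  have pw: "amin powr (\<epsilon> * real n) \<le> amin ^ j" if "real j \<le> \<epsilon> * real n" for j
    using powr_anti_base[OF am that] am by (simp add: powr_realpow)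
  let ?X = "P1 (shift L (ra \<omega>)) (shift L (tc \<omega>))"
  have gxL: "good bmax (shift L (ra \<omega>)) (shift L (tc \<omega>))" by (rule good_shift[OF gx])
  have raL: "amin \<le> shift L (ra \<omega>) k" for k unfolding shift_def by (rule ra_ge[OF w])
  have QL: "Qc \<omega> L \<epsilon>" using good[OF LN] by simp
  obtain j1 where j1: "L \<le> j1" "real j1 < real L + \<epsilon> * real L" "\<omega> j1 = (i0, 2)"
    using QL D1(2) unfolding Qc_def by blast
  obtain j2 where j2: "L \<le> j2" "real j2 < real L + \<epsilon> * real L" "\<omega> j2 = (i0, 1)"
    using QL D1(1) unfolding Qc_def by blast
  have eLn: "\<epsilon> * real L \<le> \<epsilon> * real n" using Ln par by simp
  have X1: "amin powr (\<epsilon> * real n) * \<kappa> \<le> ?X"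
  proof -
    have o: "real (j1 - L) \<le> \<epsilon> * real n" using j1 eLn by (simp add: of_nat_diff)
    have "amin ^ (j1 - L) * shift L (tc \<omega>) (j1 - L) \<le> ?X" by (rule offset_bounds(1)[OF gxL raL]) (use am in simp)
    moreover have "shift L (tc \<omega>) (j1 - L) = c i0 2" using j1 by (simp add: shift_def tc_def)
    moreover have "amin powr (\<epsilon> * real n) * \<kappa> \<le> amin ^ (j1 - L) * c i0 2"
      by (rule mult_mono) (use pw[OF o] kap kpos am in auto)
    ultimately show ?thesis by simp
  qed
  have X2: "amin powr (\<epsilon> * real n) * \<kappa> \<le> 1 - ?X"
  proof -
    have o: "real (j2 - L) \<le> \<epsilon> * real n" using j2 eLn by (simp add: of_nat_diff)
    have "amin ^ (j2 - L) * (1 - shift L (tc \<omega>) (j2 - L) - shift L (ra \<omega>) (j2 - L)) \<le> 1 - ?X"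
      by (rule offset_bounds(2)[OF gxL raL]) (use am in simp)
    moreover have "shift L (tc \<omega>) (j2 - L) = c i0 1" "shift L (ra \<omega>) (j2 - L) = a i0 1"
      using j2 by (simp_all add: shift_def tc_def ra_def)
    moreover have "amin powr (\<epsilon> * real n) * \<kappa> \<le> amin ^ (j2 - L) * (1 - c i0 1 - a i0 1)"
      by (rule mult_mono) (use pw[OF o] kap kpos am in auto)
    ultimately show ?thesis by simp
  qed
  let ?Y = "P1 (shift n (rb \<omega>)) (shift n (td \<omega>))"
  have gyn: "good bmax (shift n (rb \<omega>)) (shift n (td \<omega>))" by (rule good_shift[OF gy])
  have rbn: "amin \<le> shift n (rb \<omega>) k" for k unfolding shift_def by (rule rb_ge[OF w])
  have Qn: "Qc \<omega> n \<epsilon>" using good[OF n1(2)] by simp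
  obtain j3 where j3: "n \<le> j3" "real j3 < real n + \<epsilon> * real n" "\<omega> j3 = (2, 1)"
    using Qn D1(4) unfolding Qc_def by blast
  obtain j4 where j4: "n \<le> j4" "real j4 < real n + \<epsilon> * real n" "\<omega> j4 = (1, 1)"
    using Qn D1(3) unfolding Qc_def by blast
  have Y1: "amin powr (\<epsilon> * real n) * \<kappa> \<le> ?Y"
  proof -
    have o: "real (j3 - n) \<le> \<epsilon> * real n" using j3 by (simp add: of_nat_diff)
    have "amin ^ (j3 - n) * shift n (td \<omega>) (j3 - n) \<le> ?Y" by (rule offset_bounds(1)[OF gyn rbn]) (use am in simp)
    moreover have "shift n (td \<omega>) (j3 - n) = d 2" using j3 by (simp add: shift_def td_def)
    moreover have "amin powr (\<epsilon> * real n) * \<kappa> \<le> amin ^ (j3 - n) * d 2"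
      by (rule mult_mono) (use pw[OF o] kap kpos am in auto)
    ultimately show ?thesis by simp
  qed
  have Y2: "amin powr (\<epsilon> * real n) * \<kappa> \<le> 1 - ?Y"
  proof -
    have o: "real (j4 - n) \<le> \<epsilon> * real n" using j4 by (simp add: of_nat_diff)
    have "amin ^ (j4 - n) * (1 - shift n (td \<omega>) (j4 - n) - shift n (rb \<omega>) (j4 - n)) \<le> 1 - ?Y"
      by (rule offset_bounds(2)[OF gyn rbn]) (use am in simp)
    moreover have "shift n (td \<omega>) (j4 - n) = d 1" "shift n (rb \<omega>) (j4 - n) = b 1"
      using j4 by (simp_all add: shift_def td_def rb_def)
    moreover have "amin powr (\<epsilon> * real n) * \<kappa> \<le> amin ^ (j4 - n) * (1 - d 1 - b 1)"
      by (rule mult_mono) (use pw[OF o] kap kpos am in auto)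
    ultimately show ?thesis by simp
  qed
  have gsplit: "g n = \<kappa> * amin * \<beta> n * \<beta> n powr \<eta>"
    unfolding g_def using bpos[of n] by (simp add: powr_add)
  have alpha: "amin * \<beta> n \<le> Rp (ra \<omega>) L" unfolding \<beta>_def L_def by (rule L_ge[OF w])
  have mx: "g n \<le> Rp (ra \<omega>) L * min ?X (1 - ?X)"
  proof -
    have "g n \<le> (amin * \<beta> n) * (amin powr (\<epsilon> * real n) * \<kappa>)"
      unfolding gsplit using E kpos am bpos[of n] by (simp add: mult_left_mono mult.assoc mult.left_commute)
    also have "\<dots> \<le> Rp (ra \<omega>) L * min ?X (1 - ?X)"
      by (rule mult_mono) (use alpha X1 X2 am bpos[of n] Rp_pos[OF gx, of L] kpos in auto)
    finally show ?thesis .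
  qed
  have my: "g n \<le> \<beta> n * min ?Y (1 - ?Y)"
  proof -
    have "g n \<le> \<beta> n * (amin powr (\<epsilon> * real n) * \<kappa>)"
    proof -
      have "\<kappa> * amin * \<beta> n * \<beta> n powr \<eta> \<le> \<kappa> * 1 * \<beta> n * \<beta> n powr \<eta>"
        using kpos am bpos[of n] by (intro mult_right_mono mult_left_mono) auto
      also have "\<dots> \<le> \<beta> n * (amin powr (\<epsilon> * real n) * \<kappa>)"
        using E kpos bpos[of n] by (simp add: mult_left_mono mult.assoc mult.left_commute)
      finally show ?thesis unfolding gsplit .
    qed
    also have "\<dots> \<le> \<beta> n * min ?Y (1 - ?Y)"
      by (rule mult_left_mono) (use Y1 Y2 bpos[of n] in auto)
    finally show ?thesis .
  qed
  have inc: "\<omega>' \<in> Bset p m a b \<omega> n" if w': "\<omega>' \<in> Sg" and dd: "dist (piLG a b c d \<omega>') (piLG a b c d \<omega>) \<le> \<rho>" for \<omega>'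
  proof (rule sep2[OF w w' n1(1)])
    have "\<bar>fst (piLG a b c d \<omega>') - fst (piLG a b c d \<omega>)\<bar> \<le> \<rho>"
      using dist_fst_le[of "piLG a b c d \<omega>'" "piLG a b c d \<omega>"] dd by (simp add: dist_real_def)
    thus "\<bar>fst (piLG a b c d \<omega>') - fst (piLG a b c d \<omega>)\<bar> < Rp (ra \<omega>) (Lfun a b \<omega> n) *
        min (P1 (shift (Lfun a b \<omega> n) (ra \<omega>)) (shift (Lfun a b \<omega> n) (tc \<omega>)))
            (1 - P1 (shift (Lfun a b \<omega> n) (ra \<omega>)) (shift (Lfun a b \<omega> n) (tc \<omega>)))"
      using gn mx unfolding L_def by linarith
    have "\<bar>snd (piLG a b c d \<omega>') - snd (piLG a b c d \<omega>)\<bar> \<le> \<rho>"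
      using dist_snd_le[of "piLG a b c d \<omega>'" "piLG a b c d \<omega>"] dd by (simp add: dist_real_def)
    thus "\<bar>snd (piLG a b c d \<omega>') - snd (piLG a b c d \<omega>)\<bar> < Rp (rb \<omega>) n *
        min (P1 (shift n (rb \<omega>)) (shift n (td \<omega>))) (1 - P1 (shift n (rb \<omega>)) (shift n (td \<omega>)))"
      using gn my unfolding \<beta>_def by linarith
  qed
  define K1 where "K1 = \<kappa> * amin powr (2 + \<eta>)"
  have K1pos: "0 < K1" using kpos am by (simp add: K1_def)
  have mb: "measure \<mu> (Bset p m a b \<omega> n) \<le> K1 powr (- s) * \<rho> powr s"
  proof -
    have "g (Suc n) \<le> \<rho>" using Sn by (simp add: K_def)
    moreover have "amin * \<beta> n \<le> \<beta> (Suc n)"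
      unfolding \<beta>_def using rb_ge[OF w, of n] Rp_pos[OF gy, of n] by (simp add: Rp_Suc mult.commute mult_right_mono)
    hence hh: "amin * \<beta> n \<le> \<beta> (Suc n)" .
    have "(amin * \<beta> n) powr (1 + \<eta>) \<le> \<beta> (Suc n) powr (1 + \<eta>)"
      by (rule powr_mono2) (use hh am bpos[of n] par in auto)
    hence "\<kappa> * amin * (amin * \<beta> n) powr (1 + \<eta>) \<le> g (Suc n)"
      unfolding g_def using kpos am by simp
    moreover have "\<kappa> * amin * (amin * \<beta> n) powr (1 + \<eta>) = K1 * \<beta> n powr (1 + \<eta>)"
    proof -
      have "amin powr (2 + \<eta>) = amin powr (1 + (1 + \<eta>))" by simp
      also have "\<dots> = amin * amin powr (1 + \<eta>)" using am by (simp only: powr_add powr_one_gt_zero_iff) simp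
      finally have "amin * amin powr (1 + \<eta>) = amin powr (2 + \<eta>)" by simp
      thus ?thesis unfolding K1_def using am bpos[of n] by (simp add: powr_mult mult.assoc mult.left_commute)
    qed
    ultimately have "K1 * \<beta> n powr (1 + \<eta>) \<le> \<rho>" by linarith
    hence h: "\<beta> n powr (1 + \<eta>) \<le> \<rho> / K1" using K1pos by (simp add: field_simps)
    have "measure \<mu> (Bset p m a b \<omega> n) \<le> \<beta> n powr s'" using good[OF n1(2)] by (simp add: \<beta>_def)
    also have "\<beta> n powr s' = (\<beta> n powr (1 + \<eta>)) powr s" using par by (simp add: powr_powr)
    also have "\<dots> \<le> (\<rho> / K1) powr s" by (rule powr_mono2) (use h par in auto)
    also have "\<dots> = K1 powr (- s) * \<rho> powr s"
      using K1pos rho by (simp add: powr_divide powr_minus_divide)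
    finally show ?thesis .
  qed
  show ?thesis using inc mb unfolding K1_def by blast
qed

end

context LG begin

lemma lower_mass:
  assumes td: "two_dimensional p m" and S: "S \<subseteq> Sg" "S \<in> sets \<mu>" "0 < emeasure \<mu> S"
    and s: "0 < s" "s < s'"
    and hyp: "\<And>\<omega>. \<omega> \<in> S \<Longrightarrow> ((\<lambda>n. Rmax p m \<omega> n / ereal (real n)) \<longlonglongrightarrow> 0) \<and>
                   ereal s' < liminf (loc_ratio \<mu> p m a b \<omega>)"
  shows "hausdorff_measure s (piLG a b c d ` S) \<noteq> 0"
proof -
  obtain i0 where i0: "1 \<le> i0" "i0 \<le> p" "2 \<le> m i0" and p2: "2 \<le> p" using two_dim_facts[OF td] by blast
  have am: "0 < amin" "amin \<le> 1" using amin_pos amin_le_bmax bmax_lt1 by auto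
  define \<kappa> where "\<kappa> = min (min (c i0 2) (1 - c i0 1 - a i0 1)) (min (d 2) (1 - d 1 - b 1))"
  have kpos: "0 < \<kappa>"
  proof -
    have D1: "(i0, 1) \<in> D" using i0 by (auto simp: digits_def)
    have cpos: "0 < c i0 2" using c_sep[of i0 1 2] c_nonneg[of i0 1] ab[OF D1] i0 by auto
    have c2: "0 < 1 - c i0 1 - a i0 1"
      using c_sep[of i0 1 2] c_le[of i0 2 "m i0"] cm[of i0] i0 by auto
    have dpos: "0 < d 2" using d_sep[of 1 2] d_nonneg[of 1] b_pos[of 1] p2 by auto
    have d2: "0 < 1 - d 1 - b 1" using d_sep[of 1 2] d_le[of 2 p] dp p2 by auto
    show ?thesis using cpos c2 dpos d2 by (simp add: \<kappa>_def)
  qed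
  define \<eta> where "\<eta> = s' / s - 1"
  have eta: "0 < \<eta>" "s' = (1 + \<eta>) * s" using s by (auto simp: \<eta>_def field_simps)
  have la: "ln amin < 0" "ln bmax < 0" using am amin_le_bmax bmax_lt1 by auto
  define \<theta> where "\<theta> = ln bmax / ln amin"
  have th: "0 < \<theta>" using la by (simp add: \<theta>_def divide_neg_neg)
  define \<epsilon> where "\<epsilon> = \<eta> * \<theta>"
  have ep1: "0 < \<epsilon>" unfolding \<epsilon>_def using eta th by simp
  have ep2: "\<epsilon> * ln amin = \<eta> * ln bmax" unfolding \<epsilon>_def \<theta>_def using la by (simp add: field_simps)
  note ep = ep1 ep2
  define A where "A = (\<lambda>n. {\<omega> \<in> Sg. Qc \<omega> n \<epsilon> \<and> measure \<mu> (Bset p m a b \<omega> n) \<le> Rp (rb \<omega>) n powr s'})"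
  have Asets: "A n \<in> sets \<mu>" for n
  proof (rule sets_det[where M = "n + nat \<lceil>\<epsilon> * real n\<rceil> + 1"])
    show "A n \<subseteq> Sg" by (auto simp: A_def)
    fix \<omega> \<omega>' assume wA: "\<omega> \<in> A n" and w': "\<omega>' \<in> Sg"
      and ag: "\<forall>k<n + nat \<lceil>\<epsilon> * real n\<rceil> + 1. \<omega>' k = \<omega> k"
    have w: "\<omega> \<in> Sg" using wA by (simp add: A_def)
    have Q: "Qc \<omega>' n \<epsilon>" unfolding Qc_def
    proof
      fix e assume e: "e \<in> D"
      then obtain j where j: "n \<le> j" "real j < real n + \<epsilon> * real n" "\<omega> j = e"
        using wA by (auto simp: A_def Qc_def)
      have "real j < real (n + nat \<lceil>\<epsilon> * real n\<rceil>)"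
        using j(2) ep by (simp add: of_nat_add) linarith
      hence "j < n + nat \<lceil>\<epsilon> * real n\<rceil> + 1" by simp
      thus "\<exists>j. n \<le> j \<and> real j < real n + \<epsilon> * real n \<and> \<omega>' j = e" using j ag by auto
    qed
    have eB: "Bset p m a b \<omega>' n = Bset p m a b \<omega> n" by (rule Bset_cong[OF w]) (use ag in auto)
    have eR: "Rp (rb \<omega>') n = Rp (rb \<omega>) n" by (rule rows_eq(1)) (use ag in auto)
    show "\<omega>' \<in> A n" using wA w' Q eB eR by (simp add: A_def)
  qed
  define G where "G = (\<lambda>N. \<Inter>n\<in>{N..}. A n)"
  have Gsets: "G N \<in> sets \<mu>" for N unfolding G_def by (rule sets.countable_INT') (use Asets in auto)
  have evt: "\<exists>N. \<omega> \<in> G N" if w: "\<omega> \<in> S" for \<omega>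
  proof -
    have wS: "\<omega> \<in> Sg" using w S by auto
    have e1: "eventually (\<lambda>n. Qc \<omega> n \<epsilon>) sequentially" by (rule Qc_eventually) (use hyp[OF w] ep in auto)
    have e2: "eventually (\<lambda>n. ereal s' < loc_ratio \<mu> p m a b \<omega> n) sequentially"
      by (rule less_LiminfD) (use hyp[OF w] in auto)
    have "eventually (\<lambda>n. \<omega> \<in> A n) sequentially"
    proof (rule eventually_mono[OF eventually_conj[OF eventually_conj[OF e1 e2] eventually_ge_at_top[of 1]]])
      fix n assume h: "(Qc \<omega> n \<epsilon> \<and> ereal s' < loc_ratio \<mu> p m a b \<omega> n) \<and> 1 \<le> n"
      show "\<omega> \<in> A n" using ratio_gt[OF wS, of n s'] h wS by (simp add: A_def)
    qed
    then obtain N where "\<And>n. N \<le> n \<Longrightarrow> \<omega> \<in> A n" by (auto simp: eventually_sequentially)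
    thus ?thesis by (auto simp: G_def)
  qed
  obtain N where Npos: "emeasure \<mu> (S \<inter> G N) \<noteq> 0"
  proof (rule ccontr)
    assume "\<not> thesis"
    hence z: "\<And>N. emeasure \<mu> (S \<inter> G N) = 0" using that by blast
    have "emeasure \<mu> (\<Union>N. S \<inter> G N) = 0"
      by (rule emeasure_UN_eq_0) (use z Gsets S(2) in auto)
    moreover have "(\<Union>N. S \<inter> G N) = S" using evt by auto
    ultimately show False using S(3) by simp
  qed
  define T where "T = S \<inter> G N"
  have Tsets: "T \<in> sets \<mu>" using Gsets S(2) by (simp add: T_def)
  define mT where "mT = measure \<mu> T"
  have emT: "emeasure \<mu> T = ennreal mT" using finite_measure.emeasure_eq_measure[OF fin] by (simp add: mT_def)
  have "mT \<noteq> 0" using Npos emT by (auto simp: T_def)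
  hence mTpos: "0 < mT" using measure_nonneg[of \<mu> T] unfolding mT_def by linarith
  define N' where "N' = N + nat \<lceil>real N / \<theta>\<rceil> + 1"
  have LN: "N \<le> Lfun a b \<omega> n" if "\<omega> \<in> Sg" "N' \<le> n" for \<omega> n
  proof (rule L_big[OF that(1)])
    have "real N / \<theta> \<le> real N'" unfolding N'_def by (simp add: of_nat_add) linarith
    also have "\<dots> \<le> real n" using that(2) by simp
    finally show "real N \<le> real n * (ln bmax / ln amin)" using th by (simp add: \<theta>_def[symmetric] divide_le_eq)
  qed
  define r0 where "r0 = \<kappa> * amin * (amin ^ N') powr (1 + \<eta>)"
  have r0: "0 < r0" using kpos am by (simp add: r0_def)
  define C0 where "C0 = (\<kappa> * amin powr (2 + \<eta>)) powr (- s)"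
  have C0: "0 < C0" using kpos am by (simp add: C0_def)
  have one: "\<exists>V\<in>sets \<mu>. {\<omega>'\<in>Sg. dist (piLG a b c d \<omega>') (piLG a b c d \<omega>) \<le> \<rho>} \<subseteq> V \<and> measure \<mu> V \<le> C0 * \<rho> powr s"
    if w: "\<omega> \<in> T" and rho: "0 < \<rho>" "\<rho> < r0" for \<omega> \<rho>
  proof -
    have wS: "\<omega> \<in> Sg" using w S by (auto simp: T_def)
    have gd: "Qc \<omega> n \<epsilon> \<and> measure \<mu> (Bset p m a b \<omega> n) \<le> Rp (rb \<omega>) n powr s'" if "N \<le> n" for n
      using w that by (auto simp: T_def G_def A_def)
    obtain n where n: "\<forall>\<omega>'\<in>Sg. dist (piLG a b c d \<omega>') (piLG a b c d \<omega>) \<le> \<rho> \<longrightarrow> \<omega>' \<in> Bset p m a b \<omega> n"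
      "measure \<mu> (Bset p m a b \<omega> n) \<le> (\<kappa> * amin powr (2 + \<eta>)) powr (- s) * \<rho> powr s"
    proof -
      have N'ge: "N \<le> N'" "1 \<le> N'" by (simp_all add: N'_def)
      have r2: "\<rho> < \<kappa> * amin * (amin ^ N') powr (1 + \<eta>)" using rho(2) by (simp add: r0_def)
      show ?thesis using cover_one[OF wS i0 p2 \<kappa>_def N'ge(1) N'ge(2) LN[OF wS] gd eta(1) ep(1) ep(2) eta(2) s(1) rho(1) r2]
        that by blast
    qed
    show ?thesis using n Bset_sets unfolding C0_def by blast
  qed
  have bound: "ennreal mT \<le> ennreal C0 * (\<Sum>i. ennreal (diameter (U i) powr s))"
    if cov: "piLG a b c d ` S \<subseteq> (\<Union>i. U i)" and bU: "\<And>i. bounded (U i)" and dU: "\<And>i. diameter (U i) \<le> r0 / 2"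
    for U :: "nat \<Rightarrow> (real \<times> real) set"
  proof (rule ennreal_le_epsilon)
    fix e :: real assume e: "0 < e"
    have exV: "\<exists>V. V \<in> sets \<mu> \<and> {\<omega>\<in>T. piLG a b c d \<omega> \<in> U i} \<subseteq> V \<and>
          measure \<mu> V \<le> C0 * diameter (U i) powr s + e / 2 ^ Suc i" for i
    proof (cases "\<exists>\<omega>\<in>T. piLG a b c d \<omega> \<in> U i")
      case False
      thus ?thesis using e by (intro exI[of _ "{}"]) (auto intro!: add_nonneg_nonneg mult_nonneg_nonneg less_imp_le[OF C0])
    next
      case True
      then obtain \<omega> where w: "\<omega> \<in> T" "piLG a b c d \<omega> \<in> U i" by blast
      have d0: "0 \<le> diameter (U i)" by (rule diameter_ge_0[OF bU])
      have close: "dist (piLG a b c d \<omega>') (piLG a b c d \<omega>) \<le> diameter (U i)"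
        if "piLG a b c d \<omega>' \<in> U i" for \<omega>' by (rule diameter_bounded_bound[OF bU that w(2)])
      show ?thesis
      proof (cases "diameter (U i) = 0")
        case False
        hence dp: "0 < diameter (U i)" using d0 by simp
        have "diameter (U i) < r0" using dU[of i] r0 by simp
        then obtain V where V: "V \<in> sets \<mu>"
          "{\<omega>'\<in>Sg. dist (piLG a b c d \<omega>') (piLG a b c d \<omega>) \<le> diameter (U i)} \<subseteq> V"
          "measure \<mu> V \<le> C0 * diameter (U i) powr s" using one[OF w(1) dp] by blast
        have "{\<omega>\<in>T. piLG a b c d \<omega> \<in> U i} \<subseteq> V" using V(2) close S(1) by (auto simp: T_def)
        moreover have "0 \<le> e / 2 ^ Suc i" using e by simp
        hence "measure \<mu> V \<le> C0 * diameter (U i) powr s + e / 2 ^ Suc i" using V(3) by linarith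
        ultimately show ?thesis using V(1) by blast
      next
        case True
        define \<rho> where "\<rho> = min (r0 / 2) ((e / 2 ^ Suc i / C0) powr (1 / s))"
        have rp: "0 < \<rho>" "\<rho> < r0" using r0 e C0 by (auto simp: \<rho>_def)
        then obtain V where V: "V \<in> sets \<mu>"
          "{\<omega>'\<in>Sg. dist (piLG a b c d \<omega>') (piLG a b c d \<omega>) \<le> \<rho>} \<subseteq> V"
          "measure \<mu> V \<le> C0 * \<rho> powr s" using one[OF w(1)] by blast
        have "{\<omega>\<in>T. piLG a b c d \<omega> \<in> U i} \<subseteq> V"
        proof
          fix \<omega>' assume h: "\<omega>' \<in> {\<omega>\<in>T. piLG a b c d \<omega> \<in> U i}"
          hence "\<omega>' \<in> Sg" using S(1) by (auto simp: T_def)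
          moreover have "dist (piLG a b c d \<omega>') (piLG a b c d \<omega>) \<le> \<rho>" using close[of \<omega>'] h True rp by simp
          ultimately show "\<omega>' \<in> V" using V(2) by blast
        qed
        moreover have "C0 * \<rho> powr s \<le> e / 2 ^ Suc i"
        proof -
          have "\<rho> powr s \<le> ((e / 2 ^ Suc i / C0) powr (1 / s)) powr s"
            by (rule powr_mono2) (use rp s in \<open>auto simp: \<rho>_def\<close>)
          also have "\<dots> = e / 2 ^ Suc i / C0" using s e C0 by (simp add: powr_powr)
          finally show ?thesis using C0 by (simp add: field_simps)
        qed
        ultimately show ?thesis using V(1,3) True s by (intro exI[of _ V]) auto
      qed
    qed
    hence "\<forall>i. \<exists>V. V \<in> sets \<mu> \<and> {\<omega>\<in>T. piLG a b c d \<omega> \<in> U i} \<subseteq> V \<and>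
          measure \<mu> V \<le> C0 * diameter (U i) powr s + e / 2 ^ Suc i" by blast
    from choice[OF this] obtain V where VV: "\<forall>i. V i \<in> sets \<mu> \<and> {\<omega>\<in>T. piLG a b c d \<omega> \<in> U i} \<subseteq> V i \<and>
          measure \<mu> (V i) \<le> C0 * diameter (U i) powr s + e / 2 ^ Suc i" by blast
    have V: "\<And>i. V i \<in> sets \<mu>" "\<And>i. {\<omega>\<in>T. piLG a b c d \<omega> \<in> U i} \<subseteq> V i"
      "\<And>i. measure \<mu> (V i) \<le> C0 * diameter (U i) powr s + e / 2 ^ Suc i" using VV by blast+
    have TV: "T \<subseteq> (\<Union>i. V i)"
    proof
      fix \<omega> assume "\<omega> \<in> T"
      hence "piLG a b c d \<omega> \<in> (\<Union>i. U i)" using cov by (auto simp: T_def)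
      then obtain i where "piLG a b c d \<omega> \<in> U i" by blast
      thus "\<omega> \<in> (\<Union>i. V i)" using V(2)[of i] \<open>\<omega> \<in> T\<close> by blast
    qed
    have sums_e: "(\<lambda>i. e / 2 ^ Suc i) sums e"
    proof -
      have "(\<lambda>i. e * (1/2) ^ Suc i) sums (e * 1)" by (rule sums_mult[OF power_half_series])
      moreover have "(\<lambda>i. e * (1/2::real) ^ Suc i) = (\<lambda>i. e / 2 ^ Suc i)"
        by (rule ext) (simp only: power_one_over times_divide_eq_right mult_1_right)
      ultimately show ?thesis by simp
    qed
    have "ennreal mT = emeasure \<mu> T" by (simp add: emT)
    also have "\<dots> \<le> emeasure \<mu> (\<Union>i. V i)" by (rule emeasure_mono[OF TV]) (use V(1) in auto)
    also have "\<dots> \<le> (\<Sum>i. emeasure \<mu> (V i))" by (rule emeasure_subadditive_countably) (use V(1) in auto)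
    also have "\<dots> \<le> (\<Sum>i. ennreal (C0 * diameter (U i) powr s) + ennreal (e / 2 ^ Suc i))"
    proof (rule suminf_le)
      fix i
      have "emeasure \<mu> (V i) = ennreal (measure \<mu> (V i))" using finite_measure.emeasure_eq_measure[OF fin] by simp
      also have "\<dots> \<le> ennreal (C0 * diameter (U i) powr s + e / 2 ^ Suc i)" by (rule ennreal_leI[OF V(3)])
      also have "\<dots> = ennreal (C0 * diameter (U i) powr s) + ennreal (e / 2 ^ Suc i)"
        using C0 e by (intro ennreal_plus) auto
      finally show "emeasure \<mu> (V i) \<le> ennreal (C0 * diameter (U i) powr s) + ennreal (e / 2 ^ Suc i)" .
    qed auto
    also have "\<dots> = (\<Sum>i. ennreal (C0 * diameter (U i) powr s)) + (\<Sum>i. ennreal (e / 2 ^ Suc i))"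
      by (rule suminf_add[symmetric]) auto
    also have "(\<Sum>i. ennreal (e / 2 ^ Suc i)) = ennreal e"
    proof -
      have "(\<Sum>i. ennreal (e / 2 ^ Suc i)) = ennreal (\<Sum>i. e / 2 ^ Suc i)"
        by (rule suminf_ennreal2) (use e sums_e in \<open>auto simp: sums_iff\<close>)
      also have "(\<Sum>i. e / 2 ^ Suc i) = e" using sums_e by (rule sums_unique[symmetric])
      finally show ?thesis .
    qed
    also have "(\<Sum>i. ennreal (C0 * diameter (U i) powr s)) = ennreal C0 * (\<Sum>i. ennreal (diameter (U i) powr s))"
    proof -
      have "\<And>i. ennreal (C0 * diameter (U i) powr s) = ennreal C0 * ennreal (diameter (U i) powr s)"
        using C0 by (simp add: ennreal_mult')
      thus ?thesis by (simp only: ennreal_suminf_cmult)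
    qed
    finally show "ennreal mT \<le> ennreal C0 * (\<Sum>i. ennreal (diameter (U i) powr s)) + ennreal e" .
  qed
  have "ennreal (mT / C0) \<le> hausdorff_content s (r0 / 2) (piLG a b c d ` S)"
    unfolding hausdorff_content_def
  proof (rule INF_greatest)
    fix U :: "nat \<Rightarrow> (real \<times> real) set"
    assume "U \<in> {U. piLG a b c d ` S \<subseteq> (\<Union>i. U i) \<and> (\<forall>i. bounded (U i) \<and> diameter (U i) \<le> r0 / 2)}"
    hence B: "ennreal mT \<le> ennreal C0 * (\<Sum>i. ennreal (diameter (U i) powr s))" using bound by blast
    show "ennreal (mT / C0) \<le> (\<Sum>i. ennreal (diameter (U i) powr s))"
    proof (cases "(\<Sum>i. ennreal (diameter (U i) powr s))" rule: ennreal_cases)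
      case (real x)
      hence "ennreal mT \<le> ennreal (C0 * x)" using B C0 by (simp add: ennreal_mult)
      moreover have "0 \<le> C0 * x" using C0 real(1) by simp
      ultimately have "mT \<le> C0 * x" by (simp add: ennreal_le_iff)
      hence "mT / C0 \<le> x" using C0 by (simp add: divide_le_eq mult.commute)
      thus ?thesis using real by (simp add: ennreal_leI)
    qed simp
  qed
  also have "\<dots> \<le> hausdorff_measure s (piLG a b c d ` S)"
    unfolding hausdorff_measure_def by (rule SUP_upper) (use r0 in simp)
  finally have "ennreal (mT / C0) \<le> hausdorff_measure s (piLG a b c d ` S)" .
  moreover have "0 < ennreal (mT / C0)" using mTpos C0 by simp
  ultimately show ?thesis by auto
qed

theorem partA:
  assumes td: "two_dimensional p m" and S: "S \<subseteq> Sg" "S \<in> sets \<mu>" "0 < emeasure \<mu> S"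
    and hyp: "\<forall>\<omega>\<in>S. ((\<lambda>n. Rmax p m \<omega> n / ereal (real n)) \<longlonglongrightarrow> 0) \<and> liminf (loc_ratio \<mu> p m a b \<omega>) \<ge> ereal t"
  shows "t \<le> hausdorff_dim (piLG a b c d ` S)"
proof (rule dim_ge)
  show "\<exists>s>0. hausdorff_measure s (piLG a b c d ` S) = 0"
  proof (intro exI conjI)
    show "hausdorff_measure 3 (piLG a b c d ` S) = 0" by (rule grid) (use S(1) pi_in_square in blast)
  qed simp
  fix s assume s: "0 < s" "s < t"
  show "hausdorff_measure s (piLG a b c d ` S) \<noteq> 0"
  proof (rule lower_mass[OF td S s(1), of "(s + t) / 2"])
    show "s < (s + t) / 2" using s by simp
    fix \<omega> assume w: "\<omega> \<in> S"
    have "ereal ((s + t) / 2) < ereal t" using s by simp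
    thus "((\<lambda>n. Rmax p m \<omega> n / ereal (real n)) \<longlonglongrightarrow> 0) \<and> ereal ((s + t) / 2) < liminf (loc_ratio \<mu> p m a b \<omega>)"
      using hyp w by (meson less_le_trans)
  qed
qed

end

theorem lemma2p3:
  fixes p :: nat and m :: "nat \<Rightarrow> nat"
    and a c :: "nat \<Rightarrow> nat \<Rightarrow> real" and b d :: "nat \<Rightarrow> real"
    and \<mu> :: "(nat \<Rightarrow> nat \<times> nat) measure"
  assumes p: "1 \<le> p"
    and m: "\<And>i. 1 \<le> i \<Longrightarrow> i \<le> p \<Longrightarrow> 1 \<le> m i"
    and ab: "\<And>i j. (i, j) \<in> digits p m \<Longrightarrow> 0 < a i j \<and> a i j \<le> b i \<and> b i < 1"
    and d0: "0 \<le> d 1"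
    and dmono: "\<And>i. 1 \<le> i \<Longrightarrow> i < p \<Longrightarrow> d i \<le> d (Suc i)"
    and dp: "d p < 1"
    and dgap: "\<And>i. 1 \<le> i \<Longrightarrow> i < p \<Longrightarrow> d (Suc i) - d i \<ge> b i"
    and bdp: "b p + d p \<le> 1"
    and c0: "\<And>i. 1 \<le> i \<Longrightarrow> i \<le> p \<Longrightarrow> 0 \<le> c i 1"
    and cmono: "\<And>i j. 1 \<le> i \<Longrightarrow> i \<le> p \<Longrightarrow> 1 \<le> j \<Longrightarrow> j < m i \<Longrightarrow> c i j \<le> c i (Suc j)"
    and cm: "\<And>i. 1 \<le> i \<Longrightarrow> i \<le> p \<Longrightarrow> c i (m i) < 1"
    and cgap: "\<And>i j. 1 \<le> i \<Longrightarrow> i \<le> p \<Longrightarrow> 1 \<le> j \<Longrightarrow> j < m i \<Longrightarrow> c i (Suc j) - c i j \<ge> a i j"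
    and acm: "\<And>i. 1 \<le> i \<Longrightarrow> i \<le> p \<Longrightarrow> a i (m i) + c i (m i) \<le> 1"
    and fin: "finite_measure \<mu>"
    and borel_mu: "sets \<mu> = sets (restrict_space borel (SigmaLG p m))"
  shows
    "(\<forall>S t. two_dimensional p m \<and> S \<subseteq> SigmaLG p m \<and> S \<in> sets \<mu> \<and> emeasure \<mu> S > 0 \<and>
        (\<forall>\<omega>\<in>S. ((\<lambda>n. Rmax p m \<omega> n / ereal (real n)) \<longlonglongrightarrow> 0) \<and>
                 liminf (loc_ratio \<mu> p m a b \<omega>) \<ge> ereal t)
        \<longrightarrow> hausdorff_dim (piLG a b c d ` S) \<ge> t)
   \<and> (\<forall>S t. 0 \<le> t \<and> S \<subseteq> SigmaLG p m \<and>
        (\<forall>\<omega>\<in>S. liminf (loc_ratio \<mu> p m a b \<omega>) \<le> ereal t)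
        \<longrightarrow> hausdorff_dim (piLG a b c d ` S) \<le> t)"
proof -
  interpret LG p m a c b d \<mu> by (rule LG.intro) (fact assms)+
  show ?thesis
  proof (intro conjI allI impI)
    fix S t
    assume h: "two_dimensional p m \<and> S \<subseteq> SigmaLG p m \<and> S \<in> sets \<mu> \<and> emeasure \<mu> S > 0 \<and>
        (\<forall>\<omega>\<in>S. ((\<lambda>n. Rmax p m \<omega> n / ereal (real n)) \<longlonglongrightarrow> 0) \<and>
                 liminf (loc_ratio \<mu> p m a b \<omega>) \<ge> ereal t)"
    show "hausdorff_dim (piLG a b c d ` S) \<ge> t" using h by (intro partA) auto
  next
    fix S t
    assume h: "0 \<le> t \<and> S \<subseteq> SigmaLG p m \<and>
        (\<forall>\<omega>\<in>S. liminf (loc_ratio \<mu> p m a b \<omega>) \<le> ereal t)"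
    show "hausdorff_dim (piLG a b c d ` S) \<le> t" using h by (intro partB) auto
  qed
qed

end
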